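(* Suppose Assumptions (A1), (A2), (A3) hold, and either Assumption (SC) or Assumption (LIN) holds. If $x\in\mathcal{X}$ is an SCSC point, then $\lim_{t\to 0^+}\nabla_x\widetilde{\phi}_t(x)=\nabla_x\phi(x)$.
   Context: Let $f,g,h_1,\dots,h_k:\mathbb{R}^n\times\mathbb{R}^m\to\mathbb{R}$ and $\mathcal{X}\subseteq\mathbb{R}^n$. For $x\in\mathcal{X}$ let $\mathcal{Y}(x)=\{y\in\mathbb{R}^m: h_i(x,y)\le 0,\ i=1,\dots,k\}$ and let $y^*(x)=\arg\min_{y\in\mathcal{Y}(x)} g(x,y)$ (the set of lower-level solutions). The hyperfunction is $\phi(x)=\min_{y\in y^*(x)} f(x,y)$, and $\nabla_x\phi(x)=\nabla_x f(x,y^*(x))+(\nabla_x y^*(x))^\top\nabla_y f(x,y^*(x))$ where $y^*$ is single-valued and differentiable. For $t>0$ the barrier reformulated lower-level objective is $\widetilde g_t(x,y)=g(x,y)-t\sum_{i=1}^k\log(-h_i(x,y))$ (defined when $h_i(x,y)<0$ for all $i$), $y_t^*(x)=\arg\min_{y}\widetilde g_t(x,y)$, and $\widetilde\phi_t(x)=f(x,y_t^*(x))$. Assumptions: (A1) $f$ is once and $g,h_i$ are twice continuously differentiable; (A2) $\mathcal{X}$ is convex and compact and for every $x\in\mathcal{X}$ there is $y$ with $h_i(x,y)<0$ for all $i$; (A3) (LICQ) for every $x\in\mathcal{X}$ and $y\in y^*(x)$, the gradients $\{\nabla_y h_i(x,y): h_i(x,y)=0\}$ are linearly independent. (SC) for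 every $x\in\mathcal{X}$, $g(x,\cdot)$ is $\mu_g$-strongly convex and each $h_i(x,\cdot)$ is convex. (LIN) for every $x\in\mathcal{X}$, $g(x,\cdot)$ and all $h_i(x,\cdot)$ are linear (affine) in $y$, i.e. the lower-level problem is a linear program, and $\mathcal{Y}(x)$ is compact. For $y\in y^*(x)$ let $\lambda_i(x,y)\ge 0$ denote the optimal KKT Lagrange multiplier of the $i$-th constraint. A point $x$ is an SCSC (strict complementarity slackness condition) point if for every $y\in y^*(x)$ and every $i$, $h_i(x,y)=0$ implies $\lambda_i(x,y)>0$. *)

theory Defs
  imports "HOL-Analysis.Analysis"
begin

text \<open>Points of R^n x R^m are pairs (x,y) with x :: real^'n, y :: real^'m.
  The constraint functions are h 0, ..., h (k-1) (the paper's h_1..h_k).\<close>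

definition C1_fun :: "('a::euclidean_space \<Rightarrow> real) \<Rightarrow> bool" where
  "C1_fun F \<longleftrightarrow> (\<exists>F'. (\<forall>z. (F has_derivative blinfun_apply (F' z)) (at z)) \<and> continuous_on UNIV F')"

definition C2_fun :: "('a::euclidean_space \<Rightarrow> real) \<Rightarrow> bool" where
  "C2_fun F \<longleftrightarrow> (\<exists>F' F''. (\<forall>z. (F has_derivative blinfun_apply (F' z)) (at z))
      \<and> (\<forall>z. (F' has_derivative blinfun_apply (F'' z)) (at z)) \<and> continuous_on UNIV F'')"

definition strongly_convex_on :: "'a::real_normed_vector set \<Rightarrow> ('a \<Rightarrow> real) \<Rightarrow> real \<Rightarrow> bool" where
  "strongly_convex_on S F \<mu> \<longleftrightarrow> convex_on S (\<lambda>y. F y - \<mu> / 2 * (norm y)\<^sup>2)"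

definition Yset :: "(nat \<Rightarrow> ('x \<times> 'y) \<Rightarrow> real) \<Rightarrow> nat \<Rightarrow> 'x \<Rightarrow> 'y set" where
  "Yset h k x = {y. \<forall>i<k. h i (x, y) \<le> 0}"

definition ystar :: "(('x \<times> 'y) \<Rightarrow> real) \<Rightarrow> (nat \<Rightarrow> ('x \<times> 'y) \<Rightarrow> real) \<Rightarrow> nat \<Rightarrow> 'x \<Rightarrow> 'y set" where
  "ystar g h k x = {y \<in> Yset h k x. \<forall>y' \<in> Yset h k x. g (x, y) \<le> g (x, y')}"

text \<open>Barrier reformulated lower-level objective (meaningful where all h i < 0).\<close>
definition gbar :: "real \<Rightarrow> (('x \<times> 'y) \<Rightarrow> real) \<Rightarrow> (nat \<Rightarrow> ('x \<times> 'y) \<Rightarrow> real) \<Rightarrow> nat \<Rightarrow> ('x \<times> 'y) \<Rightarrow> real" where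
  "gbar t g h k z = g z - t * (\<Sum>i<k. ln (- h i z))"

definition ytstar :: "real \<Rightarrow> (('x \<times> 'y) \<Rightarrow> real) \<Rightarrow> (nat \<Rightarrow> ('x \<times> 'y) \<Rightarrow> real) \<Rightarrow> nat \<Rightarrow> 'x \<Rightarrow> 'y set" where
  "ytstar t g h k x = {y. (\<forall>i<k. h i (x, y) < 0) \<and>
      (\<forall>y'. (\<forall>i<k. h i (x, y') < 0) \<longrightarrow> gbar t g h k (x, y) \<le> gbar t g h k (x, y'))}"

definition Dy :: "(('x::real_normed_vector \<times> 'y::real_normed_vector) \<Rightarrow> real) \<Rightarrow> 'x \<Rightarrow> 'y \<Rightarrow> 'y \<Rightarrow> real" where
  "Dy F x y = frechet_derivative (\<lambda>y'. F (x, y')) (at y)"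

definition KKT_mult :: "(('x::real_normed_vector \<times> 'y::real_normed_vector) \<Rightarrow> real) \<Rightarrow> (nat \<Rightarrow> ('x \<times> 'y) \<Rightarrow> real) \<Rightarrow> nat \<Rightarrow> 'x \<Rightarrow> 'y \<Rightarrow> (nat \<Rightarrow> real) \<Rightarrow> bool" where
  "KKT_mult g h k x y lam \<longleftrightarrow> (\<forall>i<k. lam i \<ge> 0 \<and> lam i * h i (x, y) = 0)
      \<and> (\<forall>v. Dy g x y v + (\<Sum>i<k. lam i * Dy (h i) x y v) = 0)"

definition SCSC_point :: "(('x::real_normed_vector \<times> 'y::real_normed_vector) \<Rightarrow> real) \<Rightarrow> (nat \<Rightarrow> ('x \<times> 'y) \<Rightarrow> real) \<Rightarrow> nat \<Rightarrow> 'x \<Rightarrow> bool" where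
  "SCSC_point g h k x \<longleftrightarrow> (\<forall>y \<in> ystar g h k x. \<forall>lam. KKT_mult g h k x y lam \<longrightarrow>
      (\<forall>i<k. h i (x, y) = 0 \<longrightarrow> lam i > 0))"

definition LICQ :: "(nat \<Rightarrow> ('x::real_normed_vector \<times> 'y::real_normed_vector) \<Rightarrow> real) \<Rightarrow> nat \<Rightarrow> 'x \<Rightarrow> 'y \<Rightarrow> bool" where
  "LICQ h k x y \<longleftrightarrow> (\<forall>c :: nat \<Rightarrow> real.
      (\<forall>v. (\<Sum>i\<in>{i. i < k \<and> h i (x, y) = 0}. c i * Dy (h i) x y v) = 0) \<longrightarrow>
      (\<forall>i. i < k \<and> h i (x, y) = 0 \<longrightarrow> c i = 0))"

text \<open>The hypergradient formula
  grad_x f(x,Y x) + (Jacobian of Y at x)^T grad_y f(x,Y x), written componentwise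
  via the (total) Frechet derivative of f at (x, Y x); DY is the derivative of Y at x.\<close>
definition hypergrad :: "(((real^'n) \<times> 'y::real_normed_vector) \<Rightarrow> real) \<Rightarrow> (real^'n \<Rightarrow> 'y) \<Rightarrow> (real^'n \<Rightarrow> 'y) \<Rightarrow> real^'n \<Rightarrow> real^'n" where
  "hypergrad f Y DY x = (\<chi> j. frechet_derivative f (at (x, Y x)) (axis j 1, DY (axis j 1)))"

end

theory Submission
  imports Defs
begin

lemma has_derivative_vec_lambda_at:
  fixes s :: "'a::real_normed_vector \<Rightarrow> 'i::finite \<Rightarrow> real"
  assumes "\<And>j. ((\<lambda>p. s p j) has_derivative (\<lambda>w. ds w j)) (at p)"
  shows "((\<lambda>p. \<chi> j. s p j) has_derivative (\<lambda>w. \<chi> j. ds w j)) (at p)"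
proof -
  have "\<forall>i\<in>Basis. ((\<lambda>p. (\<chi> j. s p j) \<bullet> i) has_derivative (\<lambda>w. (\<chi> j. ds w j) \<bullet> i)) (at p within UNIV)"
  proof
    fix i :: "real^'i" assume "i \<in> Basis"
    then obtain j where i: "i = axis j 1" by (auto simp: Basis_vec_def)
    show "((\<lambda>p. (\<chi> j. s p j) \<bullet> i) has_derivative (\<lambda>w. (\<chi> j. ds w j) \<bullet> i)) (at p within UNIV)"
      unfolding i inner_axis by (simp add: assms)
  qed
  then show ?thesis using has_derivative_componentwise_within by blast
qed

lemma partial_has_derivative:
  assumes "(F has_derivative D) (at (a, b))"
  shows "((\<lambda>y. F (a, y)) has_derivative (\<lambda>v. D (0, v))) (at b)"
proof -
  have "((\<lambda>y. (a, y)) has_derivative (\<lambda>v. (0, v))) (at b)"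
    by (auto intro!: derivative_eq_intros)
  from has_derivative_compose[OF this assms[folded at_within_def]] show ?thesis
    by (simp add: o_def)
qed

lemma convex_gradient_ineq:
  fixes \<phi> :: "'a::real_normed_vector \<Rightarrow> real"
  assumes cvx: "convex_on UNIV \<phi>" and der: "(\<phi> has_derivative D) (at y)"
  shows "\<phi> y' \<ge> \<phi> y + D (y' - y)"
proof (rule ccontr)
  assume "\<not> ?thesis"
  hence neg: "\<phi> y' - \<phi> y - D (y' - y) < 0" by simp
  define d where "d = y' - y"
  define \<psi> where "\<psi> s = \<phi> (y + s *\<^sub>R d) - s * (\<phi> y' - \<phi> y)" for s :: real
  have bl: "bounded_linear D" using der has_derivative_bounded_linear by blast
  have "((\<lambda>s. y + s *\<^sub>R d) has_derivative (\<lambda>s. s *\<^sub>R d)) (at 0)"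
    by (auto intro!: derivative_eq_intros)
  from has_derivative_compose[OF this] der
  have "((\<lambda>s. \<phi> (y + s *\<^sub>R d)) has_derivative (\<lambda>s. D (s *\<^sub>R d))) (at 0)"
    by (simp add: o_def)
  hence "((\<lambda>s. \<phi> (y + s *\<^sub>R d)) has_derivative (\<lambda>s. s * D d)) (at 0)"
    using bl by (simp add: linear_simps)
  hence "((\<lambda>s. \<phi> (y + s *\<^sub>R d) - s * (\<phi> y' - \<phi> y)) has_derivative (\<lambda>s. s * D d - s * (\<phi> y' - \<phi> y))) (at 0)"
    by (auto intro!: derivative_eq_intros)
  hence "DERIV \<psi> 0 :> (D d - (\<phi> y' - \<phi> y))"
    unfolding \<psi>_def has_field_derivative_def
    by (rule has_derivative_eq_rhs) (auto simp: fun_eq_iff algebra_simps)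
  moreover have "D d - (\<phi> y' - \<phi> y) > 0" using neg d_def by simp
  ultimately obtain e where e: "e > 0" "\<And>h. h > 0 \<Longrightarrow> h < e \<Longrightarrow> \<psi> 0 < \<psi> (0 + h)"
    using DERIV_pos_inc_right by blast
  define h where "h = min (e/2) (1/2)"
  have h: "h > 0" "h < e" "h \<le> 1" using e by (auto simp: h_def)
  have "\<phi> (y + h *\<^sub>R d) = \<phi> ((1 - h) *\<^sub>R y + h *\<^sub>R y')"
    by (simp add: d_def algebra_simps)
  also have "\<dots> \<le> (1 - h) * \<phi> y + h * \<phi> y'"
    using cvx h by (intro convex_onD) auto
  finally have "\<psi> h \<le> \<psi> 0" by (simp add: \<psi>_def algebra_simps)
  with e(2)[OF h(1) h(2)] show False by simp
qed

lemma convex_second_deriv_lb: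
  fixes \<psi> :: "'a::real_inner \<Rightarrow> real"
  assumes cvx: "convex_on UNIV (\<lambda>y. \<psi> y - c/2 * (norm y)^2)"
   and d1: "\<And>y. (\<psi> has_derivative D\<psi> y) (at y)"
   and d2: "((\<lambda>y. D\<psi> y v) has_derivative E) (at y0)"
  shows "E v \<ge> c * (norm v)^2"
proof (rule ccontr)
  assume "\<not> ?thesis"
  hence neg: "E v - c * (v \<bullet> v) < 0" by (simp add: power2_norm_eq_inner)
  define \<phi> where "\<phi> y = \<psi> y - c/2 * (y \<bullet> y)" for y
  have cvx': "convex_on UNIV \<phi>" using cvx unfolding \<phi>_def by (simp add: power2_norm_eq_inner)
  have d\<phi>: "(\<phi> has_derivative (\<lambda>w. D\<psi> y w - c * (y \<bullet> w))) (at y)" for y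
  proof -
    have "((\<lambda>y. y \<bullet> y) has_derivative (\<lambda>w. w \<bullet> y + y \<bullet> w)) (at y)"
      by (rule has_derivative_eq_rhs[OF has_derivative_inner[OF has_derivative_ident has_derivative_ident]])
         (auto simp: inner_commute)
    hence "((\<lambda>y. c/2 * (y \<bullet> y)) has_derivative (\<lambda>w. c/2 * (w \<bullet> y + y \<bullet> w))) (at y)"
      by (rule has_derivative_mult_right)
    from has_derivative_diff[OF d1 this] show ?thesis unfolding \<phi>_def
      by (rule has_derivative_eq_rhs) (auto simp: fun_eq_iff inner_commute algebra_simps)
  qed
  have bl: "bounded_linear (D\<psi> y)" for y using d1 has_derivative_bounded_linear by blast
  have mono: "D\<psi> (y0 + s *\<^sub>R v) v - c * s * (v \<bullet> v) \<ge> D\<psi> y0 v" if "s > 0" for s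
  proof -
    let ?y1 = "y0 + s *\<^sub>R v"
    have i1: "\<phi> ?y1 \<ge> \<phi> y0 + (D\<psi> y0 (s *\<^sub>R v) - c * (y0 \<bullet> (s *\<^sub>R v)))"
      using convex_gradient_ineq[OF cvx' d\<phi>[of y0], of ?y1] by simp
    have i2: "\<phi> y0 \<ge> \<phi> ?y1 + (D\<psi> ?y1 (- (s *\<^sub>R v)) - c * (?y1 \<bullet> (- (s *\<^sub>R v))))"
      using convex_gradient_ineq[OF cvx' d\<phi>[of ?y1], of y0] by simp
    have "D\<psi> y0 (s *\<^sub>R v) = s * D\<psi> y0 v" using bl[of y0] by (simp add: linear_simps)
    moreover have "D\<psi> ?y1 (- (s *\<^sub>R v)) = - (s * D\<psi> ?y1 v)" using bl[of ?y1] by (simp add: linear_simps)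
    ultimately have "0 \<ge> s * D\<psi> y0 v - s * D\<psi> ?y1 v + c * s * s * (v \<bullet> v)"
      using i1 i2 by (simp add: algebra_simps inner_add_left)
    hence "s * (D\<psi> y0 v) \<le> s * (D\<psi> ?y1 v - c * s * (v \<bullet> v))" by (simp add: algebra_simps)
    thus ?thesis using that by simp
  qed
  define \<theta> where "\<theta> s = D\<psi> (y0 + s *\<^sub>R v) v - c * s * (v \<bullet> v)" for s :: real
  have "((\<lambda>s. y0 + s *\<^sub>R v) has_derivative (\<lambda>s. s *\<^sub>R v)) (at 0)"
    by (auto intro!: derivative_eq_intros)
  from has_derivative_compose[OF this] d2
  have "((\<lambda>s. D\<psi> (y0 + s *\<^sub>R v) v) has_derivative (\<lambda>s. E (s *\<^sub>R v))) (at 0)"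
    by (simp add: o_def)
  moreover have "bounded_linear E" using d2 has_derivative_bounded_linear by blast
  ultimately have "((\<lambda>s. D\<psi> (y0 + s *\<^sub>R v) v) has_derivative (\<lambda>s. s * E v)) (at 0)"
    by (simp add: linear_simps)
  hence "((\<lambda>s. D\<psi> (y0 + s *\<^sub>R v) v - c * s * (v \<bullet> v)) has_derivative (\<lambda>s. s * E v - c * s * (v \<bullet> v))) (at 0)"
    by (auto intro!: derivative_eq_intros)
  hence "DERIV \<theta> 0 :> (E v - c * (v \<bullet> v))"
    unfolding \<theta>_def has_field_derivative_def
    by (rule has_derivative_eq_rhs) (auto simp: fun_eq_iff algebra_simps)
  from DERIV_neg_dec_right[OF this neg] obtain e where
    e: "e > 0" "\<And>h. h > 0 \<Longrightarrow> h < e \<Longrightarrow> \<theta> 0 > \<theta> (0 + h)" by blast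
  have "\<theta> (e/2) \<ge> \<theta> 0" using mono[of "e/2"] e(1) by (simp add: \<theta>_def)
  with e(2)[of "e/2"] e(1) show False by simp
qed

lemma inv_blinfun_tendsto:
  fixes M :: "'b \<Rightarrow> ('a::euclidean_space \<Rightarrow>\<^sub>L 'a)"
  assumes lim: "(M \<longlongrightarrow> M0) F" and b0: "bij (blinfun_apply M0)"
    and bt: "\<forall>\<^sub>F t in F. bij (blinfun_apply (M t))"
  shows "((\<lambda>t. inv (blinfun_apply (M t)) w) \<longlongrightarrow> inv (blinfun_apply M0) w) F"
proof -
  have lin0: "linear (blinfun_apply M0)" by (rule bounded_linear.linear[OF blinfun.bounded_linear_right])
  obtain g where g: "linear g" "g \<circ> blinfun_apply M0 = id"
    using linear_injective_left_inverse[OF lin0] b0 bij_is_inj by blast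
  have ginv: "inv (blinfun_apply M0) y = g y" for y
    by (metis b0 bij_inv_eq_iff comp_apply g(2) id_apply)
  define B0 where "B0 = Blinfun g"
  have B0: "blinfun_apply B0 = g"
    unfolding B0_def using g(1) by (simp add: bounded_linear_Blinfun_apply linear_conv_bounded_linear)
  define K where "K = norm B0"
  have K: "K \<ge> 0" by (simp add: K_def)
  define z where "z t = inv (blinfun_apply (M t)) w" for t
  have ev1: "\<forall>\<^sub>F t in F. blinfun_apply (M t) (z t) = w"
    using bt by eventually_elim (simp add: z_def bij_is_surj surj_f_inv_f)
  have Mz: "((\<lambda>t. norm (M t - M0)) \<longlongrightarrow> 0) F"
    using lim by (simp add: tendsto_norm_zero_iff LIM_zero_iff)
  hence eps0: "((\<lambda>t. K * norm (M t - M0)) \<longlongrightarrow> 0) F"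
    using tendsto_mult_right_zero by blast
  hence ev2: "\<forall>\<^sub>F t in F. K * norm (M t - M0) < 1/2"
    by (rule order_tendstoD) simp
  have key: "\<forall>\<^sub>F t in F. norm (z t - g w) \<le> K * norm (M t - M0) * (2 * norm (g w))"
    using ev1 ev2
  proof eventually_elim
    case (elim t)
    have "z t - g w = g (blinfun_apply M0 (z t) - w)"
      using g by (metis comp_apply id_apply linear_diff)
    also have "\<dots> = g (blinfun_apply (M0 - M t) (z t))"
      using elim(1) by (simp add: blinfun.diff_left)
    finally have e: "z t - g w = blinfun_apply B0 (blinfun_apply (M0 - M t) (z t))" by (simp add: B0)
    have "norm (z t - g w) \<le> K * (norm (M0 - M t) * norm (z t))"
      unfolding e K_def by (meson norm_blinfun mult_left_mono norm_ge_zero order_trans)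
    also have "norm (M0 - M t) = norm (M t - M0)" by (simp add: norm_minus_commute)
    finally have n1: "norm (z t - g w) \<le> K * norm (M t - M0) * norm (z t)" by (simp add: mult.assoc)
    have "norm (z t) \<le> norm (g w) + norm (z t - g w)" by (metis add.commute norm_triangle_sub)
    also have "\<dots> \<le> norm (g w) + 1/2 * norm (z t)"
      using n1 elim(2) by (smt (verit, best) mult_right_mono norm_ge_zero)
    finally have "norm (z t) \<le> 2 * norm (g w)" by simp
    hence "K * norm (M t - M0) * norm (z t) \<le> K * norm (M t - M0) * (2 * norm (g w))"
      by (simp add: K mult_left_mono)
    with n1 show ?case by simp
  qed
  have "((\<lambda>t. K * norm (M t - M0) * (2 * norm (g w))) \<longlongrightarrow> 0) F"
    using tendsto_mult_left_zero[OF eps0] by simp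
  from Lim_null_comparison[OF key this] have "((\<lambda>t. z t - g w) \<longlongrightarrow> 0) F" .
  thus ?thesis unfolding z_def ginv by (simp add: LIM_zero_iff)
qed

lemma licq_inj:
  fixes a :: "nat \<Rightarrow> 'v::real_vector"
  assumes fin: "finite A" and licq: "\<forall>c. (\<Sum>i\<in>A. c i *\<^sub>R a i) = 0 \<longrightarrow> (\<forall>i\<in>A. c i = 0)"
  shows "inj_on a A"
proof
  fix i i' assume ii: "i \<in> A" "i' \<in> A" "a i = a i'"
  show "i = i'"
  proof (rule ccontr)
    assume ne: "i \<noteq> i'"
    define c where "c l = (if l = i then 1 else if l = i' then -1 else (0::real))" for l
    have "(\<Sum>l\<in>A. c l *\<^sub>R a l) = (\<Sum>l\<in>{i,i'}. c l *\<^sub>R a l)"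
      using ii fin by (intro sum.mono_neutral_right) (auto simp: c_def)
    also have "\<dots> = 0" using ne ii by (simp add: c_def)
    finally have "c i = 0" using licq ii by blast
    thus False by (simp add: c_def)
  qed
qed

lemma span_image_repr:
  fixes a :: "nat \<Rightarrow> 'v::real_vector"
  assumes fin: "finite B" and inj: "inj_on a B" and v: "v \<in> span (a ` B)"
  obtains r where "v = (\<Sum>i\<in>B. r i *\<^sub>R a i)"
proof -
  from v obtain u where "v = (\<Sum>w\<in>a ` B. u w *\<^sub>R w)"
    using span_finite[of "a ` B"] fin by auto
  also have "\<dots> = (\<Sum>i\<in>B. u (a i) *\<^sub>R a i)" using inj by (simp add: sum.reindex)
  finally show ?thesis by (rule that)
qed

lemma dual_vector:
  fixes a :: "nat \<Rightarrow> 'v::euclidean_space"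
  assumes fin: "finite A" and licq: "\<forall>c. (\<Sum>i\<in>A. c i *\<^sub>R a i) = 0 \<longrightarrow> (\<forall>i\<in>A. c i = 0)"
    and j: "j \<in> A"
  obtains d where "a j \<bullet> d = 1" "\<And>i. i \<in> A \<Longrightarrow> i \<noteq> j \<Longrightarrow> a i \<bullet> d = 0"
proof -
  have inj: "inj_on a A" using licq_inj[OF fin licq] .
  obtain u z where u: "u \<in> span (a ` (A - {j}))" and z: "\<And>w. w \<in> span (a ` (A - {j})) \<Longrightarrow> orthogonal z w"
    and dec: "a j = u + z"
    using orthogonal_subspace_decomp_exists by blast
  have "z \<noteq> 0"
  proof
    assume z0: "z = 0"
    obtain r where r: "u = (\<Sum>i\<in>A - {j}. r i *\<^sub>R a i)"
      using span_image_repr[OF _ _ u] fin inj by (meson finite_Diff inj_on_diff)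
    define c where "c i = (if i = j then -1 else r i)" for i
    have "(\<Sum>i\<in>A. c i *\<^sub>R a i) = c j *\<^sub>R a j + (\<Sum>i\<in>A - {j}. c i *\<^sub>R a i)"
      using j fin by (simp add: sum.remove)
    also have "(\<Sum>i\<in>A - {j}. c i *\<^sub>R a i) = u" unfolding r by (intro sum.cong) (auto simp: c_def)
    finally have "(\<Sum>i\<in>A. c i *\<^sub>R a i) = 0" using dec z0 by (simp add: c_def)
    hence "c j = 0" using licq j by blast
    thus False by (simp add: c_def)
  qed
  define d where "d = (1 / (z \<bullet> z)) *\<^sub>R z"
  have zz: "z \<bullet> z > 0" using \<open>z \<noteq> 0\<close> by simp
  have "u \<bullet> z = 0" using z[OF u] by (simp add: orthogonal_def inner_commute)
  hence "a j \<bullet> d = 1" using zz by (simp add: d_def dec inner_add_left)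
  moreover have "a i \<bullet> d = 0" if "i \<in> A" "i \<noteq> j" for i
  proof -
    have "a i \<in> span (a ` (A - {j}))" using that by (intro span_base) auto
    hence "z \<bullet> a i = 0" using z by (simp add: orthogonal_def)
    thus ?thesis by (simp add: d_def inner_commute)
  qed
  ultimately show ?thesis using that by blast
qed

lemma kkt_from_directional:
  fixes a :: "nat \<Rightarrow> 'v::euclidean_space" and b :: 'v
  assumes fin: "finite A"
   and licq: "\<forall>c. (\<Sum>i\<in>A. c i *\<^sub>R a i) = 0 \<longrightarrow> (\<forall>i\<in>A. c i = 0)"
   and dir: "\<And>d. (\<forall>i\<in>A. a i \<bullet> d < 0) \<Longrightarrow> b \<bullet> d \<ge> 0"
  shows "\<exists>lam. (\<forall>i\<in>A. lam i \<ge> 0) \<and> b + (\<Sum>i\<in>A. lam i *\<^sub>R a i) = 0"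
proof -
  have inj: "inj_on a A" using licq_inj[OF fin licq] .
  have "\<forall>j\<in>A. \<exists>d. a j \<bullet> d = 1 \<and> (\<forall>i\<in>A. i \<noteq> j \<longrightarrow> a i \<bullet> d = 0)"
    using dual_vector[OF fin licq] by metis
  then obtain dv where dv: "\<And>j. j \<in> A \<Longrightarrow> a j \<bullet> dv j = 1"
      "\<And>i j. j \<in> A \<Longrightarrow> i \<in> A \<Longrightarrow> i \<noteq> j \<Longrightarrow> a i \<bullet> dv j = 0"
    by metis
  have dvs: "a i \<bullet> dv j = (if i = j then 1 else 0)" if "i \<in> A" "j \<in> A" for i j
    using dv that by auto
  define d0 where "d0 = - (\<Sum>j\<in>A. dv j)"
  have d0: "a i \<bullet> d0 = -1" if "i \<in> A" for i
  proof -
    have "a i \<bullet> d0 = - (\<Sum>j\<in>A. a i \<bullet> dv j)" by (simp add: d0_def inner_sum_right)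
    also have "(\<Sum>j\<in>A. a i \<bullet> dv j) = (\<Sum>j\<in>A. if i = j then 1 else 0)"
      using that dvs by (intro sum.cong) auto
    also have "\<dots> = 1" using fin that by simp
    finally show ?thesis by simp
  qed
  have dir2: "b \<bullet> d \<ge> 0" if "\<forall>i\<in>A. a i \<bullet> d \<le> 0" for d
  proof (rule ccontr)
    assume "\<not> ?thesis"
    hence neg: "b \<bullet> d < 0" by simp
    define e where "e = (- (b \<bullet> d)) / (2 * (\<bar>b \<bullet> d0\<bar> + 1))"
    have e: "e > 0" using neg unfolding e_def by (intro divide_pos_pos) (simp, smt (verit) abs_ge_zero)
    have "\<forall>i\<in>A. a i \<bullet> (d + e *\<^sub>R d0) < 0"
      using that d0 e by (auto simp: inner_add_right)
    hence "b \<bullet> (d + e *\<^sub>R d0) \<ge> 0" by (rule dir)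
    hence "b \<bullet> d + e * (b \<bullet> d0) \<ge> 0" by (simp add: inner_add_right)
    moreover have "e * (b \<bullet> d0) \<le> e * \<bar>b \<bullet> d0\<bar>" using e by (simp add: mult_left_mono)
    moreover have "e * \<bar>b \<bullet> d0\<bar> < - (b \<bullet> d)"
    proof -
      have "e * \<bar>b \<bullet> d0\<bar> = (- (b \<bullet> d)) * (\<bar>b \<bullet> d0\<bar> / (2 * (\<bar>b \<bullet> d0\<bar> + 1)))"
        by (simp add: e_def)
      also have "\<dots> < (- (b \<bullet> d)) * 1"
      proof (rule mult_strict_left_mono)
        show "\<bar>b \<bullet> d0\<bar> / (2 * (\<bar>b \<bullet> d0\<bar> + 1)) < 1"
          by (simp add: divide_less_eq)
      qed (use neg in simp)
      finally show ?thesis by simp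
    qed
    ultimately show False by simp
  qed
  obtain u z where u: "u \<in> span (a ` A)" and z: "\<And>w. w \<in> span (a ` A) \<Longrightarrow> orthogonal z w"
    and dec: "b = u + z"
    using orthogonal_subspace_decomp_exists by blast
  have za: "a i \<bullet> z = 0" if "i \<in> A" for i
    using z[of "a i"] that by (simp add: span_base orthogonal_def inner_commute)
  have "b \<bullet> z \<ge> 0" using dir2[of z] za by simp
  moreover have "b \<bullet> (- z) \<ge> 0" using dir2[of "-z"] za by simp
  ultimately have "b \<bullet> z = 0" by simp
  moreover have "u \<bullet> z = 0" using z[OF u] by (simp add: orthogonal_def inner_commute)
  ultimately have "z \<bullet> z = 0" by (simp add: dec inner_add_left)
  hence bu: "b = u" using dec by simp
  obtain r where r: "u = (\<Sum>i\<in>A. r i *\<^sub>R a i)" using span_image_repr[OF fin inj u] by blast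
  have "r j \<le> 0" if j: "j \<in> A" for j
  proof -
    have "\<forall>i\<in>A. a i \<bullet> (- dv j) \<le> 0" using dvs j by auto
    hence "b \<bullet> (- dv j) \<ge> 0" by (rule dir2)
    moreover have "b \<bullet> dv j = (\<Sum>i\<in>A. r i * (a i \<bullet> dv j))" by (simp add: bu r inner_sum_left)
    moreover have "\<dots> = (\<Sum>i\<in>A. if i = j then r i else 0)" using dvs j by (intro sum.cong) auto
    moreover have "\<dots> = r j" using fin j by simp
    ultimately show ?thesis by simp
  qed
  moreover have "b + (\<Sum>i\<in>A. (- r i) *\<^sub>R a i) = 0" by (simp add: bu r sum_negf)
  ultimately show ?thesis by (intro exI[of _ "\<lambda>i. - r i"]) auto
qed

definition gy :: "(('a::real_normed_vector \<times> (real^'m)) \<Rightarrow>\<^sub>L real) \<Rightarrow> real^'m" where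
  "gy L = (\<chi> j. blinfun_apply L (0, axis j 1))"

lemma gy_inner: "blinfun_apply L (0, v) = gy L \<bullet> v"
proof -
  have lin: "linear (\<lambda>v. blinfun_apply L (0, v))"
    by (rule bounded_linear.linear) (auto intro!: bounded_linear_intros)
  have "v = (\<Sum>j\<in>UNIV. v $ j *\<^sub>R axis j 1)"
    using basis_expansion[of v] by (simp add: scalar_mult_eq_scaleR)
  hence "blinfun_apply L (0, v) = blinfun_apply L (0, \<Sum>j\<in>UNIV. v $ j *\<^sub>R axis j 1)" by simp
  also have "\<dots> = (\<Sum>j\<in>UNIV. v $ j * blinfun_apply L (0, axis j 1))"
    using linear_sum[OF lin, of "\<lambda>j. v $ j *\<^sub>R axis j 1" UNIV] linear_cmul[OF lin] by simp
  also have "\<dots> = gy L \<bullet> v" by (simp add: gy_def inner_vec_def mult.commute)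
  finally show ?thesis .
qed

lemma gy_linear: "gy (L1 + L2) = gy L1 + gy L2" "gy (c *\<^sub>R L) = c *\<^sub>R gy L" "gy 0 = 0"
  by (auto simp: gy_def vec_eq_iff blinfun.add_left blinfun.scaleR_left)

lemma gy_sum: "gy (\<Sum>i\<in>S. L i) = (\<Sum>i\<in>S. gy (L i))"
  by (induction S rule: infinite_finite_induct) (auto simp: gy_linear)

lemma convex_on_sum_fun:
  assumes "finite S" "convex C" "\<And>i. i \<in> S \<Longrightarrow> convex_on C (F i)"
  shows "convex_on C (\<lambda>y. \<Sum>i\<in>S. F i y)"
  using assms by (induction S rule: finite_induct) (auto intro!: convex_on_add simp: convex_on_const)

lemma strong_gradient_ineq:
  fixes \<psi> :: "'a::real_inner \<Rightarrow> real"
  assumes cvx: "convex_on UNIV (\<lambda>y. \<psi> y - c/2 * (norm y)^2)"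
    and der: "(\<psi> has_derivative D) (at y)"
  shows "\<psi> y' \<ge> \<psi> y + D (y' - y) + c/2 * (norm (y' - y))^2"
proof -
  have "((\<lambda>y. y \<bullet> y) has_derivative (\<lambda>w. w \<bullet> y + y \<bullet> w)) (at y)"
    by (rule has_derivative_eq_rhs[OF has_derivative_inner[OF has_derivative_ident has_derivative_ident]])
       (auto simp: inner_commute)
  hence "((\<lambda>y. c/2 * (y \<bullet> y)) has_derivative (\<lambda>w. c/2 * (w \<bullet> y + y \<bullet> w))) (at y)"
    by (rule has_derivative_mult_right)
  from has_derivative_diff[OF der this]
  have d: "((\<lambda>y. \<psi> y - c/2 * (norm y)^2) has_derivative (\<lambda>w. D w - c * (y \<bullet> w))) (at y)"
    unfolding power2_norm_eq_inner
    by (rule has_derivative_eq_rhs) (auto simp: fun_eq_iff inner_commute algebra_simps)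
  from convex_gradient_ineq[OF cvx d, of y']
  have "\<psi> y' - c/2 * (y' \<bullet> y') \<ge> \<psi> y - c/2 * (y \<bullet> y) + (D (y' - y) - c * (y \<bullet> (y' - y)))"
    by (simp add: power2_norm_eq_inner)
  moreover have "(y' - y) \<bullet> (y' - y) = y' \<bullet> y' - 2 * (y \<bullet> y') + y \<bullet> y"
    by (simp add: inner_diff_left inner_diff_right inner_commute)
  ultimately show ?thesis
    by (simp add: power2_norm_eq_inner inner_diff_right algebra_simps)
qed

lemma deriv_neg_eventually:
  fixes \<phi> :: "real \<Rightarrow> real"
  assumes "DERIV \<phi> 0 :> l" "l < 0"
  shows "\<forall>\<^sub>F s in at_right 0. \<phi> s < \<phi> 0"
proof -
  obtain e where e: "e > 0" "\<And>h. h > 0 \<Longrightarrow> h < e \<Longrightarrow> \<phi> 0 > \<phi> (0 + h)"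
    using DERIV_neg_dec_right[OF assms] by blast
  show ?thesis unfolding eventually_at_right_field using e by (intro exI[of _ e]) auto
qed

lemma directional_DERIV:
  fixes F :: "'a::real_normed_vector \<Rightarrow> real"
  assumes "(F has_derivative D) (at y)"
  shows "DERIV (\<lambda>s. F (y + s *\<^sub>R d)) 0 :> D d"
proof -
  have "((\<lambda>s. y + s *\<^sub>R d) has_derivative (\<lambda>s. s *\<^sub>R d)) (at 0)"
    by (auto intro!: derivative_eq_intros)
  from has_derivative_compose[OF this] assms
  have "((\<lambda>s. F (y + s *\<^sub>R d)) has_derivative (\<lambda>s. D (s *\<^sub>R d))) (at 0)" by (simp add: o_def)
  moreover have "bounded_linear D" using assms has_derivative_bounded_linear by blast
  hence "(\<lambda>s. D (s *\<^sub>R d)) = (*) (D d)"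
    by (auto simp: fun_eq_iff linear_simps mult.commute)
  ultimately show ?thesis unfolding has_field_derivative_def by simp
qed

lemma ln_strict: "(u::real) > 0 \<Longrightarrow> u \<noteq> 1 \<Longrightarrow> ln u < u - 1"
proof -
  assume u: "u > 0" "u \<noteq> 1"
  have s: "sqrt u > 0" "sqrt u \<noteq> 1" using u by auto
  have "ln u = 2 * ln (sqrt u)" using u by (simp add: ln_sqrt)
  also have "\<dots> \<le> 2 * (sqrt u - 1)" using ln_le_minus_one[OF s(1)] by simp
  also have "\<dots> < u - 1"
  proof -
    have "(sqrt u - 1)^2 > 0" using s by simp
    hence "u - 2 * sqrt u + 1 > 0" using u by (simp add: power2_eq_square algebra_simps)
    thus ?thesis by simp
  qed
  finally show ?thesis .
qed

lemma ln_ineq: "(u::real) > 0 \<Longrightarrow> v > 0 \<Longrightarrow> ln u \<le> ln v + (u - v) / v"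
proof -
  assume uv: "u > 0" "v > 0"
  have "ln (u / v) \<le> u / v - 1" using ln_le_minus_one[of "u/v"] uv by simp
  thus ?thesis using uv by (simp add: ln_div diff_divide_distrib)
qed

lemma ln_ineq_eq: "(u::real) > 0 \<Longrightarrow> v > 0 \<Longrightarrow> ln u = ln v + (u - v) / v \<Longrightarrow> u = v"
proof (rule ccontr)
  assume uv: "u > 0" "v > 0" "ln u = ln v + (u - v) / v" "u \<noteq> v"
  have "u / v \<noteq> 1" using uv by simp
  hence "ln (u / v) < u / v - 1" using ln_strict uv by simp
  thus False using uv by (simp add: ln_div diff_divide_distrib)
qed

lemma affine_grad:
  fixes F :: "('a::real_normed_vector \<times> (real^'m)) \<Rightarrow> real"
  assumes d: "(F has_derivative blinfun_apply L) (at (x', y))"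
    and aff: "\<forall>y. F (x', y) = a \<bullet> y + b"
  shows "gy L = a"
proof -
  have d1: "((\<lambda>y. F (x', y)) has_derivative (\<lambda>v. blinfun_apply L (0, v))) (at y)"
    using partial_has_derivative[OF d] .
  have d2: "((\<lambda>y. F (x', y)) has_derivative (\<lambda>v. a \<bullet> v)) (at y)"
  proof -
    have e: "(\<lambda>y. F (x', y)) = (\<lambda>y. a \<bullet> y + b)" using aff by auto
    show ?thesis unfolding e
      by (rule has_derivative_add_const[OF bounded_linear_imp_has_derivative[OF bounded_linear_inner_right]])
  qed
  have "(\<lambda>v. blinfun_apply L (0, v)) = (\<lambda>v. a \<bullet> v)"
    using has_derivative_unique[OF d1 d2] .
  hence "gy L \<bullet> v = a \<bullet> v" for v by (metis gy_inner)
  hence "(gy L - a) \<bullet> (gy L - a) = 0" by (simp add: inner_diff_left inner_diff_right)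
  thus ?thesis by simp
qed

lemma blinfun_apply_has_derivative:
  assumes "(F' has_derivative blinfun_apply M) (at p)"
  shows "((\<lambda>p. blinfun_apply (F' p) w) has_derivative (\<lambda>u. blinfun_apply (blinfun_apply M u) w)) (at p)"
  using bounded_linear.has_derivative[OF blinfun.bounded_linear_left assms] .

lemma affine_hess:
  fixes F' :: "('a::real_normed_vector \<times> 'b::real_normed_vector) \<Rightarrow> (('a \<times> 'b) \<Rightarrow>\<^sub>L real)"
  assumes d: "(F' has_derivative blinfun_apply M) (at (x', y))"
    and const: "\<forall>y. blinfun_apply (F' (x', y)) (0, v) = c"
  shows "blinfun_apply (blinfun_apply M (0, d)) (0, v) = 0"
proof -
  have d1: "((\<lambda>y. blinfun_apply (F' (x', y)) (0, v)) has_derivative (\<lambda>d. blinfun_apply (blinfun_apply M (0, d)) (0, v))) (at y)"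
    using partial_has_derivative[OF blinfun_apply_has_derivative[OF d]] .
  have d2: "((\<lambda>y. blinfun_apply (F' (x', y)) (0, v)) has_derivative (\<lambda>d. 0)) (at y)"
  proof -
    have "(\<lambda>y. blinfun_apply (F' (x', y)) (0, v)) = (\<lambda>y. c)" using const by auto
    thus ?thesis by simp
  qed
  from has_derivative_unique[OF d1 d2] show ?thesis by metis
qed

lemma Dy_eq:
  assumes "(F has_derivative blinfun_apply L) (at (x', y))"
  shows "Dy F x' y v = gy L \<bullet> v"
proof -
  have "((\<lambda>y. F (x', y)) has_derivative (\<lambda>v. blinfun_apply L (0, v))) (at y)"
    using partial_has_derivative[OF assms] .
  hence "Dy F x' y = (\<lambda>v. blinfun_apply L (0, v))" unfolding Dy_def
    using frechet_derivative_at by metis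
  thus ?thesis by (simp add: gy_inner)
qed

locale bl =
  fixes f g :: "((real^'n) \<times> (real^'m)) \<Rightarrow> real"
    and h :: "nat \<Rightarrow> ((real^'n) \<times> (real^'m)) \<Rightarrow> real"
    and k :: nat and X :: "(real^'n) set" and \<mu>g :: real and x :: "real^'n"
    and G' :: "((real^'n) \<times> (real^'m)) \<Rightarrow> (((real^'n) \<times> (real^'m)) \<Rightarrow>\<^sub>L real)"
    and G'' :: "((real^'n) \<times> (real^'m)) \<Rightarrow> (((real^'n) \<times> (real^'m)) \<Rightarrow>\<^sub>L (((real^'n) \<times> (real^'m)) \<Rightarrow>\<^sub>L real))"
    and H' :: "nat \<Rightarrow> ((real^'n) \<times> (real^'m)) \<Rightarrow> (((real^'n) \<times> (real^'m)) \<Rightarrow>\<^sub>L real)"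
    and H'' :: "nat \<Rightarrow> ((real^'n) \<times> (real^'m)) \<Rightarrow> (((real^'n) \<times> (real^'m)) \<Rightarrow>\<^sub>L (((real^'n) \<times> (real^'m)) \<Rightarrow>\<^sub>L real))"
  assumes G1: "\<And>z. (g has_derivative blinfun_apply (G' z)) (at z)"
    and G2: "\<And>z. (G' has_derivative blinfun_apply (G'' z)) (at z)"
    and G3: "continuous_on UNIV G''"
    and H1: "\<And>i z. i < k \<Longrightarrow> (h i has_derivative blinfun_apply (H' i z)) (at z)"
    and H2: "\<And>i z. i < k \<Longrightarrow> (H' i has_derivative blinfun_apply (H'' i z)) (at z)"
    and H3: "\<And>i. i < k \<Longrightarrow> continuous_on UNIV (H'' i)"
    and feas: "\<forall>x\<in>X. \<exists>y. \<forall>i<k. h i (x, y) < 0"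
    and A3: "\<forall>x\<in>X. \<forall>y\<in>ystar g h k x. LICQ h k x y"
    and SCL: "(\<mu>g > 0 \<and> (\<forall>x\<in>X. strongly_convex_on UNIV (\<lambda>y. g (x, y)) \<mu>g
                         \<and> (\<forall>i<k. convex_on UNIV (\<lambda>y. h i (x, y)))))
       \<or> (\<forall>x\<in>X. (\<exists>a b. \<forall>y. g (x, y) = a \<bullet> y + b)
                 \<and> (\<forall>i<k. \<exists>a b. \<forall>y. h i (x, y) = a \<bullet> y + b)
                 \<and> compact (Yset h k x))"
    and xX: "x \<in> X"
    and scsc: "SCSC_point g h k x"
begin

definition SCc where "SCc \<longleftrightarrow> \<mu>g > 0 \<and> (\<forall>x\<in>X. strongly_convex_on UNIV (\<lambda>y. g (x, y)) \<mu>g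
                         \<and> (\<forall>i<k. convex_on UNIV (\<lambda>y. h i (x, y))))"

definition cc where "cc = (if SCc then \<mu>g else 0)"

lemma LIN: "\<not> SCc \<Longrightarrow> x' \<in> X \<Longrightarrow> (\<exists>a b. \<forall>y. g (x', y) = a \<bullet> y + b)
                 \<and> (\<forall>i<k. \<exists>a b. \<forall>y. h i (x', y) = a \<bullet> y + b) \<and> compact (Yset h k x')"
  using SCL unfolding SCc_def by blast

lemma cc_nonneg: "cc \<ge> 0" by (simp add: cc_def SCc_def)

lemma cont_g: "continuous_on UNIV g"
  using G1 has_derivative_continuous by (blast intro: continuous_at_imp_continuous_on)

lemma cont_h: "i < k \<Longrightarrow> continuous_on UNIV (h i)"
  using H1 has_derivative_continuous by (blast intro: continuous_at_imp_continuous_on)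

lemma cont_G': "continuous_on UNIV G'"
  using G2 has_derivative_continuous by (blast intro: continuous_at_imp_continuous_on)

lemma cont_H': "i < k \<Longrightarrow> continuous_on UNIV (H' i)"
  using H2 has_derivative_continuous by (blast intro: continuous_at_imp_continuous_on)

lemma Dy_g: "Dy g x' y v = gy (G' (x', y)) \<bullet> v" using Dy_eq[OF G1] .
lemma Dy_h: "i < k \<Longrightarrow> Dy (h i) x' y v = gy (H' i (x', y)) \<bullet> v" using Dy_eq[OF H1] .

lemma cont_y: "continuous_on UNIV F \<Longrightarrow> continuous_on UNIV (\<lambda>y. F (x', y))"
  by (rule continuous_on_compose2[of UNIV F]) (auto intro!: continuous_intros)

lemma closed_Yset: "closed (Yset h k x')"
proof -
  have "Yset h k x' = (\<Inter>i<k. {y. h i (x', y) \<le> 0})" by (auto simp: Yset_def)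
  moreover have "closed {y. h i (x', y) \<le> 0}" if "i < k" for i
    using cont_y[OF cont_h[OF that]] by (simp add: closed_Collect_le continuous_on_const)
  ultimately show ?thesis by auto
qed

lemma lag_ineq:
  assumes x': "x' \<in> X" and lam: "\<forall>i<k. lam i \<ge> 0"
    and st: "gy (G' (x', y)) + (\<Sum>i<k. lam i *\<^sub>R gy (H' i (x', y))) = 0"
  shows "g (x', y') + (\<Sum>i<k. lam i * h i (x', y')) \<ge> g (x', y) + (\<Sum>i<k. lam i * h i (x', y)) + cc/2 * (norm (y' - y))^2"
    and "\<not> SCc \<Longrightarrow> g (x', y') + (\<Sum>i<k. lam i * h i (x', y')) = g (x', y) + (\<Sum>i<k. lam i * h i (x', y))"
proof -
  define L where "L z = g (x', z) + (\<Sum>i<k. lam i * h i (x', z))" for z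
  have dL: "(L has_derivative (\<lambda>v. blinfun_apply (G' (x', y)) (0, v) + (\<Sum>i<k. lam i * blinfun_apply (H' i (x', y)) (0, v)))) (at y)"
    unfolding L_def
    by (intro has_derivative_add has_derivative_sum has_derivative_mult_right partial_has_derivative G1 H1) auto
  have D0: "blinfun_apply (G' (x', y)) (0, v) + (\<Sum>i<k. lam i * blinfun_apply (H' i (x', y)) (0, v)) = 0" for v
  proof -
    have "blinfun_apply (G' (x', y)) (0, v) + (\<Sum>i<k. lam i * blinfun_apply (H' i (x', y)) (0, v))
        = (gy (G' (x', y)) + (\<Sum>i<k. lam i *\<^sub>R gy (H' i (x', y)))) \<bullet> v"
      by (simp add: gy_inner inner_add_left inner_sum_left)
    thus ?thesis using st by simp
  qed
  have dL0: "(L has_derivative (\<lambda>v. 0)) (at y)" using dL D0 by simp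
  have LIN_eq: "L y' = L y" if nsc: "\<not> SCc"
  proof -
    obtain a b where ab: "\<forall>z. g (x', z) = a \<bullet> z + b" using LIN[OF nsc x'] by blast
    have "\<forall>i<k. \<exists>a b. \<forall>y. h i (x', y) = a \<bullet> y + b" using LIN[OF nsc x'] by blast
    then obtain ah bh where abh: "\<And>i. i < k \<Longrightarrow> \<forall>z. h i (x', z) = ah i \<bullet> z + bh i" by metis
    have "gy (G' (x', y)) = a" using affine_grad[OF G1 ab] .
    moreover have "gy (H' i (x', y)) = ah i" if "i < k" for i using affine_grad[OF H1[OF that] abh[OF that]] .
    ultimately have s0: "a + (\<Sum>i<k. lam i *\<^sub>R ah i) = 0" using st by simp
    have "L y' - L y = (a + (\<Sum>i<k. lam i *\<^sub>R ah i)) \<bullet> (y' - y)"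
      by (simp add: L_def ab abh inner_add_left inner_sum_left inner_diff_right algebra_simps
           sum_subtractf[symmetric] sum.distrib[symmetric])
    thus ?thesis using s0 by simp
  qed
  have "L y' \<ge> L y + cc/2 * (norm (y' - y))^2"
  proof (cases SCc)
    case True
    hence sc: "strongly_convex_on UNIV (\<lambda>y. g (x', y)) \<mu>g" "\<forall>i<k. convex_on UNIV (\<lambda>y. h i (x', y))"
      using x' unfolding SCc_def by auto
    have "convex_on UNIV (\<lambda>z. L z - cc/2 * (norm z)^2)"
    proof -
      have "convex_on UNIV (\<lambda>z. (g (x', z) - \<mu>g/2 * (norm z)^2) + (\<Sum>i<k. lam i * h i (x', z)))"
        using sc lam unfolding strongly_convex_on_def
        by (intro convex_on_add convex_on_sum_fun convex_on_cmul) auto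
      thus ?thesis using True by (simp add: L_def cc_def algebra_simps)
    qed
    from strong_gradient_ineq[OF this dL0] show ?thesis by simp
  next
    case False
    thus ?thesis using LIN_eq by (simp add: cc_def)
  qed
  thus "g (x', y') + (\<Sum>i<k. lam i * h i (x', y')) \<ge> g (x', y) + (\<Sum>i<k. lam i * h i (x', y)) + cc/2 * (norm (y' - y))^2"
    by (simp add: L_def)
  show "g (x', y') + (\<Sum>i<k. lam i * h i (x', y')) = g (x', y) + (\<Sum>i<k. lam i * h i (x', y))" if "\<not> SCc"
    using LIN_eq[OF that] by (simp add: L_def)
qed

end

context bl begin

lemma exists_ystar: "\<exists>y0. y0 \<in> ystar g h k x"
proof -
  obtain y1 where y1: "\<forall>i<k. h i (x, y1) < 0" using feas xX by blast
  hence y1Y: "y1 \<in> Yset h k x" by (auto simp: Yset_def less_imp_le)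
  have cg: "continuous_on UNIV (\<lambda>y. g (x, y))" using cont_y[OF cont_g] .
  show ?thesis
  proof (cases SCc)
    case True
    define S where "S = Yset h k x \<inter> {y. g (x, y) \<le> g (x, y1)}"
    have cS: "closed S" unfolding S_def
      using closed_Yset cg by (intro closed_Int) (auto simp: closed_Collect_le continuous_on_const)
    have cvx: "convex_on UNIV (\<lambda>y. g (x, y) - \<mu>g/2 * (norm y)^2)" and mu: "\<mu>g > 0"
      using True xX unfolding SCc_def strongly_convex_on_def by auto
    define b where "b = gy (G' (x, y1))"
    have d: "((\<lambda>y. g (x, y)) has_derivative (\<lambda>v. b \<bullet> v)) (at y1)"
      using partial_has_derivative[OF G1[of "(x, y1)"]] by (simp add: gy_inner b_def)
    have "S \<subseteq> cball y1 (2 * norm b / \<mu>g)"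
    proof
      fix y assume "y \<in> S"
      hence gy: "g (x, y) \<le> g (x, y1)" by (simp add: S_def)
      have ineq: "g (x, y) \<ge> g (x, y1) + b \<bullet> (y - y1) + \<mu>g/2 * (norm (y - y1))^2"
        using strong_gradient_ineq[OF cvx d] by simp
      have cs: "- (b \<bullet> (y - y1)) \<le> norm b * norm (y - y1)"
        using norm_cauchy_schwarz[of b "y1 - y"] by (simp add: inner_diff_right norm_minus_commute)
      have "\<mu>g/2 * (norm (y - y1))^2 \<le> norm b * norm (y - y1)" using gy ineq cs by linarith
      hence "norm (y - y1) * (\<mu>g/2 * norm (y - y1)) \<le> norm (y - y1) * norm b"
        by (simp add: power2_eq_square algebra_simps)
      hence "norm (y - y1) = 0 \<or> \<mu>g/2 * norm (y - y1) \<le> norm b"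
        by (metis mult_le_cancel_left norm_ge_zero order_le_less)
      hence "norm (y - y1) \<le> 2 * norm b / \<mu>g" using mu by (auto simp: field_simps)
      thus "y \<in> cball y1 (2 * norm b / \<mu>g)" by (simp add: dist_norm norm_minus_commute)
    qed
    hence "bounded S" using bounded_cball bounded_subset by blast
    hence comp: "compact S" using cS compact_eq_bounded_closed by blast
    have "y1 \<in> S" using y1Y by (simp add: S_def)
    then obtain y0 where y0: "y0 \<in> S" "\<And>y. y \<in> S \<Longrightarrow> g (x, y0) \<le> g (x, y)"
      using continuous_attains_inf[OF comp _ continuous_on_subset[OF cg]] by blast
    have "y0 \<in> ystar g h k x"
      unfolding ystar_def
    proof (intro CollectI conjI ballI)
      show "y0 \<in> Yset h k x" using y0 by (simp add: S_def)
      fix y' assume "y' \<in> Yset h k x"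
      thus "g (x, y0) \<le> g (x, y')"
      proof (cases "y' \<in> S")
        case False
        hence "g (x, y') > g (x, y1)" using \<open>y' \<in> Yset h k x\<close> by (auto simp: S_def)
        moreover have "g (x, y0) \<le> g (x, y1)" using y0(2) \<open>y1 \<in> S\<close> by blast
        ultimately show ?thesis by simp
      qed (use y0 in blast)
    qed
    thus ?thesis by blast
  next
    case False
    have comp: "compact (Yset h k x)" using LIN[OF False xX] by blast
    obtain y0 where y0: "y0 \<in> Yset h k x" "\<And>y. y \<in> Yset h k x \<Longrightarrow> g (x, y0) \<le> g (x, y)"
      using continuous_attains_inf[OF comp _ continuous_on_subset[OF cg]] y1Y by blast
    thus ?thesis unfolding ystar_def by blast
  qed
qed

definition y0 where "y0 = (SOME y. y \<in> ystar g h k x)"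

lemma y0: "y0 \<in> ystar g h k x"
  unfolding y0_def using exists_ystar someI_ex by metis

definition A where "A = {i. i < k \<and> h i (x, y0) = 0}"

lemma A_sub: "A \<subseteq> {..<k}" and finA: "finite A"
  by (auto simp: A_def)

lemma y0_feas: "i < k \<Longrightarrow> h i (x, y0) \<le> 0"
  using y0 by (simp add: ystar_def Yset_def)

lemma inactive: "i < k \<Longrightarrow> i \<notin> A \<Longrightarrow> h i (x, y0) < 0"
  using y0_feas by (force simp: A_def)

definition av where "av i = gy (H' i (x, y0))"

lemma licq_base: "\<forall>c. (\<Sum>i\<in>A. c i *\<^sub>R av i) = 0 \<longrightarrow> (\<forall>i\<in>A. c i = 0)"
proof (intro allI impI)
  fix c assume s: "(\<Sum>i\<in>A. c i *\<^sub>R av i) = 0"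
  have L: "LICQ h k x y0" using A3 xX y0 by blast
  have "(\<Sum>i\<in>{i. i < k \<and> h i (x, y0) = 0}. c i * Dy (h i) x y0 v) = 0" for v
  proof -
    have "(\<Sum>i\<in>{i. i < k \<and> h i (x, y0) = 0}. c i * Dy (h i) x y0 v) = (\<Sum>i\<in>A. c i * (av i \<bullet> v))"
      by (intro sum.cong) (auto simp: A_def av_def Dy_h)
    also have "\<dots> = (\<Sum>i\<in>A. c i *\<^sub>R av i) \<bullet> v" by (simp add: inner_sum_left)
    finally show ?thesis using s by simp
  qed
  with L show "\<forall>i\<in>A. c i = 0" unfolding LICQ_def A_def by blast
qed

lemma directional_base:
  assumes d: "\<forall>i\<in>A. av i \<bullet> d < 0"
  shows "gy (G' (x, y0)) \<bullet> d \<ge> 0"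
proof (rule ccontr)
  assume "\<not> ?thesis"
  hence neg: "gy (G' (x, y0)) \<bullet> d < 0" by simp
  have Dh: "DERIV (\<lambda>s. h i (x, y0 + s *\<^sub>R d)) 0 :> av i \<bullet> d" if "i < k" for i
    using directional_DERIV[OF partial_has_derivative[OF H1[OF that, of "(x, y0)"]], of d]
    by (simp add: gy_inner av_def)
  have Dg: "DERIV (\<lambda>s. g (x, y0 + s *\<^sub>R d)) 0 :> gy (G' (x, y0)) \<bullet> d"
    using directional_DERIV[OF partial_has_derivative[OF G1[of "(x, y0)"]], of d]
    by (simp add: gy_inner)
  have evh: "\<forall>\<^sub>F s in at_right 0. h i (x, y0 + s *\<^sub>R d) < 0" if "i < k" for i
  proof (cases "i \<in> A")
    case True
    from deriv_neg_eventually[OF Dh[OF that]] d True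
    show ?thesis using True by (simp add: A_def)
  next
    case False
    have "isCont (\<lambda>s. h i (x, y0 + s *\<^sub>R d)) 0" using DERIV_isCont[OF Dh[OF that]] .
    hence "((\<lambda>s. h i (x, y0 + s *\<^sub>R d)) \<longlongrightarrow> h i (x, y0)) (at_right 0)"
      by (simp add: isCont_def filterlim_at_split)
    moreover have "h i (x, y0) < 0" using inactive[OF that False] .
    ultimately show ?thesis by (rule order_tendstoD)
  qed
  have "\<forall>\<^sub>F s in at_right 0. \<forall>i\<in>{..<k}. h i (x, y0 + s *\<^sub>R d) < 0"
    using evh by (intro eventually_ball_finite) auto
  moreover have "\<forall>\<^sub>F s in at_right 0. g (x, y0 + s *\<^sub>R d) < g (x, y0)"
    using deriv_neg_eventually[OF Dg neg] by simp
  ultimately have "\<forall>\<^sub>F s in at_right 0. (\<forall>i\<in>{..<k}. h i (x, y0 + s *\<^sub>R d) < 0) \<and> g (x, y0 + s *\<^sub>R d) < g (x, y0)"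
    by (rule eventually_conj)
  then obtain s where s: "\<forall>i<k. h i (x, y0 + s *\<^sub>R d) < 0" "g (x, y0 + s *\<^sub>R d) < g (x, y0)"
    using eventually_happens'[OF trivial_limit_at_right_real] by fastforce
  have "y0 + s *\<^sub>R d \<in> Yset h k x" using s(1) by (auto simp: Yset_def less_imp_le)
  hence "g (x, y0) \<le> g (x, y0 + s *\<^sub>R d)" using y0 by (auto simp: ystar_def)
  with s(2) show False by simp
qed

definition lam0 where "lam0 = (SOME lam. (\<forall>i\<in>A. lam i \<ge> 0) \<and> gy (G' (x, y0)) + (\<Sum>i\<in>A. lam i *\<^sub>R av i) = 0)"

lemma lam0_ex: "(\<forall>i\<in>A. lam0 i \<ge> 0) \<and> gy (G' (x, y0)) + (\<Sum>i\<in>A. lam0 i *\<^sub>R av i) = 0"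
proof -
  have "\<exists>lam. (\<forall>i\<in>A. lam i \<ge> 0) \<and> gy (G' (x, y0)) + (\<Sum>i\<in>A. lam i *\<^sub>R av i) = 0"
    using kkt_from_directional[OF finA licq_base] directional_base by blast
  thus ?thesis unfolding lam0_def by (rule someI_ex)
qed

definition lam where "lam i = (if i \<in> A then lam0 i else 0)"

lemma lam_sum: "(\<Sum>i<k. lam i *\<^sub>R av i) = (\<Sum>i\<in>A. lam0 i *\<^sub>R av i)"
proof -
  have "(\<Sum>i<k. lam i *\<^sub>R av i) = (\<Sum>i\<in>A. lam i *\<^sub>R av i)"
    using A_sub by (intro sum.mono_neutral_right) (auto simp: lam_def)
  also have "\<dots> = (\<Sum>i\<in>A. lam0 i *\<^sub>R av i)" by (intro sum.cong) (auto simp: lam_def)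
  finally show ?thesis .
qed

lemma stat0: "gy (G' (x, y0)) + (\<Sum>i<k. lam i *\<^sub>R gy (H' i (x, y0))) = 0"
  using lam0_ex lam_sum by (simp add: av_def)

lemma kkt0: "KKT_mult g h k x y0 lam"
  unfolding KKT_mult_def
proof (intro conjI allI impI)
  fix i assume "i < k"
  show "0 \<le> lam i" using lam0_ex by (simp add: lam_def)
  show "lam i * h i (x, y0) = 0" by (simp add: lam_def A_def)
next
  fix v
  have "Dy g x y0 v + (\<Sum>i<k. lam i * Dy (h i) x y0 v) = (gy (G' (x, y0)) + (\<Sum>i<k. lam i *\<^sub>R gy (H' i (x, y0)))) \<bullet> v"
    by (simp add: Dy_g Dy_h inner_add_left inner_sum_left)
  thus "Dy g x y0 v + (\<Sum>i<k. lam i * Dy (h i) x y0 v) = 0" using stat0 by simp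
qed

lemma lam_pos: "i \<in> A \<Longrightarrow> lam i > 0"
  using scsc kkt0 y0 unfolding SCSC_point_def A_def by blast

lemma lam_zero: "i \<notin> A \<Longrightarrow> lam i = 0"
  by (simp add: lam_def)

end

context bl begin

lemma lin_forms:
  assumes "\<not> SCc" "x' \<in> X"
  obtains \<gamma> c0 \<alpha> \<beta> where "\<And>y. g (x', y) = \<gamma> \<bullet> y + c0" "\<And>i y. i < k \<Longrightarrow> h i (x', y) = \<alpha> i \<bullet> y + \<beta> i"
    "\<And>y. gy (G' (x', y)) = \<gamma>" "\<And>i y. i < k \<Longrightarrow> gy (H' i (x', y)) = \<alpha> i"
proof -
  obtain \<gamma> c0 where ab: "\<forall>z. g (x', z) = \<gamma> \<bullet> z + c0" using LIN[OF assms] by blast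
  have "\<forall>i<k. \<exists>a b. \<forall>y. h i (x', y) = a \<bullet> y + b" using LIN[OF assms] by blast
  then obtain ah bh where abh: "\<And>i. i < k \<Longrightarrow> \<forall>z. h i (x', z) = ah i \<bullet> z + bh i" by metis
  show ?thesis
  proof (rule that)
    show "g (x', y) = \<gamma> \<bullet> y + c0" for y using ab by blast
    show "h i (x', y) = ah i \<bullet> y + bh i" if "i < k" for i y using abh[OF that] by blast
    show "gy (G' (x', y)) = \<gamma>" for y using affine_grad[OF G1 ab] .
    show "gy (H' i (x', y)) = ah i" if "i < k" for i y using affine_grad[OF H1[OF that] abh[OF that]] .
  qed
qed

lemma span_base:
  assumes nsc: "\<not> SCc" and dA: "\<forall>i\<in>A. h i (x, y0 + d) = h i (x, y0)"
  shows "d = 0"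
proof (rule ccontr)
  assume dne: "d \<noteq> 0"
  obtain \<gamma> c0 \<alpha> \<beta> where gl: "\<And>y. g (x, y) = \<gamma> \<bullet> y + c0" and hl: "\<And>i y. i < k \<Longrightarrow> h i (x, y) = \<alpha> i \<bullet> y + \<beta> i"
    and gg: "\<And>y. gy (G' (x, y)) = \<gamma>" and gh: "\<And>i y. i < k \<Longrightarrow> gy (H' i (x, y)) = \<alpha> i"
    using lin_forms[OF nsc xX] by metis
  have comp: "compact (Yset h k x)" using LIN[OF nsc xX] by blast
  have hs: "h i (x, y0 + s *\<^sub>R d) = h i (x, y0) + s * (\<alpha> i \<bullet> d)" if "i < k" for i s
    using hl[OF that] by (simp add: inner_add_right algebra_simps)
  have aA: "\<alpha> i \<bullet> d = 0" if "i \<in> A" for i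
  proof -
    have ik: "i < k" using that A_sub by auto
    have "h i (x, y0 + d) = h i (x, y0)" using dA that by blast
    thus ?thesis unfolding hl[OF ik] by (simp add: inner_add_right)
  qed
  have st: "\<gamma> + (\<Sum>i<k. lam i *\<^sub>R \<alpha> i) = 0"
    using stat0 gg gh by simp
  have gd: "\<gamma> \<bullet> d = 0"
  proof -
    have "\<gamma> \<bullet> d = - (\<Sum>i<k. lam i * (\<alpha> i \<bullet> d))"
      using arg_cong[OF st, of "\<lambda>v. v \<bullet> d"] by (simp add: inner_add_left inner_sum_left eq_neg_iff_add_eq_0)
    also have "(\<Sum>i<k. lam i * (\<alpha> i \<bullet> d)) = 0"
      by (intro sum.neutral) (metis aA lam_zero mult_eq_0_iff)
    finally show ?thesis by simp
  qed
  define J where "J = {i. i < k \<and> i \<notin> A \<and> \<alpha> i \<bullet> d > 0}"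
  show False
  proof (cases "J = {}")
    case True
    have feasray: "y0 + s *\<^sub>R d \<in> Yset h k x" if "s \<ge> 0" for s
      unfolding Yset_def
    proof (intro CollectI allI impI)
      fix i assume i: "i < k"
      have "s * (\<alpha> i \<bullet> d) \<le> 0"
      proof (cases "i \<in> A")
        case True thus ?thesis using aA by simp
      next
        case False
        hence "\<alpha> i \<bullet> d \<le> 0" using \<open>J = {}\<close> i by (auto simp: J_def)
        thus ?thesis using that by (simp add: mult_nonneg_nonpos)
      qed
      thus "h i (x, y0 + s *\<^sub>R d) \<le> 0" using hs[OF i] y0_feas[OF i] by simp
    qed
    obtain B where B: "\<And>y. y \<in> Yset h k x \<Longrightarrow> norm y \<le> B"
      using compact_imp_bounded[OF comp] bounded_iff by blast
    define s where "s = (B + norm y0 + 1) / norm d"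
    have B0: "B \<ge> 0" using B[OF feasray[of 0]] by (simp add: order_trans[OF norm_ge_zero])
    have sp: "s \<ge> 0" using B0 by (simp add: s_def)
    have "norm (s *\<^sub>R d) = B + norm y0 + 1" using dne B0 by (simp add: s_def)
    moreover have "norm (s *\<^sub>R d) \<le> norm (y0 + s *\<^sub>R d) + norm y0"
      by (metis add.commute add_diff_cancel_left' norm_triangle_ineq4)
    ultimately have "norm (y0 + s *\<^sub>R d) > B" by simp
    with B[OF feasray[OF sp]] show False by simp
  next
    case False
    have finJ: "finite J" by (simp add: J_def)
    define r where "r i = - h i (x, y0) / (\<alpha> i \<bullet> d)" for i
    define s0 where "s0 = Min (r ` J)"
    have rpos: "r i > 0" if "i \<in> J" for i
      using that inactive[of i] by (auto simp: J_def r_def divide_neg_pos)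
    obtain j where j: "j \<in> J" "s0 = r j"
    proof -
      have "s0 \<in> r ` J" unfolding s0_def using finJ False by (intro Min_in) auto
      thus ?thesis using that by blast
    qed
    have s0pos: "s0 > 0" using rpos j by simp
    have s0le: "s0 \<le> r i" if "i \<in> J" for i using finJ that by (simp add: s0_def)
    define y1 where "y1 = y0 + s0 *\<^sub>R d"
    have hj: "h j (x, y1) = 0"
    proof -
      have jk: "j < k" "\<alpha> j \<bullet> d > 0" using j by (auto simp: J_def)
      have "h j (x, y1) = h j (x, y0) + r j * (\<alpha> j \<bullet> d)" unfolding y1_def j(2) by (rule hs[OF jk(1)])
      thus ?thesis using jk(2) by (simp add: r_def)
    qed
    have y1Y: "y1 \<in> Yset h k x"
      unfolding Yset_def
    proof (intro CollectI allI impI)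
      fix i assume i: "i < k"
      show "h i (x, y1) \<le> 0"
      proof (cases "i \<in> J")
        case True
        hence ad: "\<alpha> i \<bullet> d > 0" by (simp add: J_def)
        have "s0 * (\<alpha> i \<bullet> d) \<le> r i * (\<alpha> i \<bullet> d)" using s0le[OF True] ad by (simp add: mult_right_mono)
        also have "\<dots> = - h i (x, y0)" using ad by (simp add: r_def)
        finally show ?thesis using hs[OF i] by (simp add: y1_def)
      next
        case False
        hence "\<alpha> i \<bullet> d \<le> 0" using i aA by (cases "i \<in> A") (auto simp: J_def)
        hence "s0 * (\<alpha> i \<bullet> d) \<le> 0" using s0pos by (simp add: mult_nonneg_nonpos)
        thus ?thesis using hs[OF i] y0_feas[OF i] by (simp add: y1_def)
      qed
    qed
    have gy1: "g (x, y1) = g (x, y0)" using gd by (simp add: gl y1_def inner_add_right)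
    have y1s: "y1 \<in> ystar g h k x" using y0 y1Y gy1 by (auto simp: ystar_def)
    have kkt1: "KKT_mult g h k x y1 lam"
      unfolding KKT_mult_def
    proof (intro conjI allI impI)
      fix i assume i: "i < k"
      show "0 \<le> lam i" using kkt0 i by (simp add: KKT_mult_def)
      show "lam i * h i (x, y1) = 0"
      proof (cases "i \<in> A")
        case True
        hence "h i (x, y1) = h i (x, y0)" using hs[OF i] aA by (simp add: y1_def)
        thus ?thesis using True by (simp add: A_def)
      qed (simp add: lam_zero)
    next
      fix v
      have "Dy g x y1 v + (\<Sum>i<k. lam i * Dy (h i) x y1 v) = (\<gamma> + (\<Sum>i<k. lam i *\<^sub>R \<alpha> i)) \<bullet> v"
        by (simp add: Dy_g Dy_h gg gh inner_add_left inner_sum_left)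
      thus "Dy g x y1 v + (\<Sum>i<k. lam i * Dy (h i) x y1 v) = 0" using st by simp
    qed
    have "lam j > 0" using scsc y1s kkt1 hj j unfolding SCSC_point_def J_def by blast
    moreover have "lam j = 0" using j by (simp add: J_def lam_zero)
    ultimately show False by simp
  qed
qed

end

type_synonym ('a, 'b) pt = "((real^'a) \<times> real) \<times> ((real^'b) \<times> (real^'b))"

definition Pp :: "('a, 'b) pt \<Rightarrow> (real^'a) \<times> (real^'b)" where "Pp p = (fst (fst p), fst (snd p))"
definition tp :: "('a, 'b) pt \<Rightarrow> real" where "tp p = snd (fst p)"
definition mp :: "('a, 'b) pt \<Rightarrow> real^'b" where "mp p = snd (snd p)"

lemma bl_Pp: "bounded_linear Pp"
  unfolding Pp_def by (intro bounded_linear_Pair bounded_linear_compose[OF bounded_linear_fst] bounded_linear_fst bounded_linear_snd)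
lemma bl_tp: "bounded_linear tp"
  unfolding tp_def by (intro bounded_linear_compose[OF bounded_linear_snd] bounded_linear_fst)
lemma bl_mp: "bounded_linear mp"
  unfolding mp_def by (intro bounded_linear_compose[OF bounded_linear_snd] bounded_linear_snd)

lemma d_Pp: "(Pp has_derivative Pp) F" using bounded_linear_imp_has_derivative[OF bl_Pp] .
lemma d_tp: "(tp has_derivative tp) F" using bounded_linear_imp_has_derivative[OF bl_tp] .
lemma d_mpj: "((\<lambda>p. mp p $ j) has_derivative (\<lambda>w. mp w $ j)) F"
  using bounded_linear_imp_has_derivative[OF bounded_linear_compose[OF bounded_linear_vec_nth bl_mp]] .

lemma gy_has_derivative:
  assumes "(L has_derivative L') (at p)"
  shows "((\<lambda>p. gy (L p)) has_derivative (\<lambda>w. gy (L' w))) (at p)"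
  unfolding gy_def
  by (intro has_derivative_vec_lambda_at bounded_linear.has_derivative[OF blinfun.bounded_linear_left assms])

context bl begin

lemma card_A: "card A \<le> CARD('m)"
proof -
  have inj: "inj_on av A" using licq_inj[OF finA licq_base] .
  have "independent (av ` A)"
  proof
    assume "dependent (av ` A)"
    then obtain u where u: "\<exists>v\<in>av ` A. u v \<noteq> 0" "(\<Sum>v\<in>av ` A. u v *\<^sub>R v) = 0"
      using real_vector.dependent_finite[of "av ` A"] finA by auto
    have "(\<Sum>i\<in>A. u (av i) *\<^sub>R av i) = 0" using u(2) inj by (simp add: sum.reindex)
    hence "\<forall>i\<in>A. u (av i) = 0" using licq_base[rule_format, of "\<lambda>i. u (av i)"] by blast
    thus False using u(1) by auto
  qed
  from independent_bound[OF this] have "card (av ` A) \<le> CARD('m)" by simp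
  thus ?thesis using inj by (simp add: card_image)
qed

definition e :: "nat \<Rightarrow> 'm" where "e = (SOME e. e ` A \<subseteq> (UNIV :: 'm set) \<and> inj_on e A)"

lemma inj_e: "inj_on e A"
proof -
  have "\<exists>e. e ` A \<subseteq> (UNIV :: 'm set) \<and> inj_on e A"
    using card_le_inj[of A "UNIV :: 'm set"] finA card_A by simp
  hence "e ` A \<subseteq> (UNIV :: 'm set) \<and> inj_on e A" unfolding e_def by (rule someI_ex)
  thus ?thesis by simp
qed

definition ie :: "'m \<Rightarrow> nat" where "ie = the_inv_into A e"

lemma ie_e [simp]: "i \<in> A \<Longrightarrow> ie (e i) = i"
  unfolding ie_def using inj_e by (simp add: the_inv_into_f_f)

lemma e_ie: "j \<in> e ` A \<Longrightarrow> e (ie j) = j" and ie_A: "j \<in> e ` A \<Longrightarrow> ie j \<in> A"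
  by auto

definition cf :: "('n, 'm) pt \<Rightarrow> nat \<Rightarrow> real" where
  "cf p i = (if i \<in> A then mp p $ e i else tp p / (- h i (Pp p)))"

definition Sfun :: "('n, 'm) pt \<Rightarrow> real^'m" where
  "Sfun p = gy (G' (Pp p)) + (\<Sum>i<k. cf p i *\<^sub>R gy (H' i (Pp p)))"

definition Cfun :: "('n, 'm) pt \<Rightarrow> real^'m" where
  "Cfun p = (\<chi> j. if j \<in> e ` A then mp p $ j * h (ie j) (Pp p) + tp p else mp p $ j)"

definition Phi :: "('n, 'm) pt \<Rightarrow> ('n, 'm) pt" where
  "Phi p = (fst p, (Sfun p, Cfun p))"

definition dcf :: "('n, 'm) pt \<Rightarrow> ('n, 'm) pt \<Rightarrow> nat \<Rightarrow> real" where
  "dcf p w i = (if i \<in> A then mp w $ e i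
      else (tp w * (- h i (Pp p)) + tp p * blinfun_apply (H' i (Pp p)) (Pp w)) / (h i (Pp p))^2)"

definition DS :: "('n, 'm) pt \<Rightarrow> ('n, 'm) pt \<Rightarrow> real^'m" where
  "DS p w = gy (blinfun_apply (G'' (Pp p)) (Pp w))
     + (\<Sum>i<k. dcf p w i *\<^sub>R gy (H' i (Pp p)) + cf p i *\<^sub>R gy (blinfun_apply (H'' i (Pp p)) (Pp w)))"

definition DC :: "('n, 'm) pt \<Rightarrow> ('n, 'm) pt \<Rightarrow> real^'m" where
  "DC p w = (\<chi> j. if j \<in> e ` A then mp w $ j * h (ie j) (Pp p) + mp p $ j * blinfun_apply (H' (ie j) (Pp p)) (Pp w) + tp w
                  else mp w $ j)"

definition DPhi :: "('n, 'm) pt \<Rightarrow> ('n, 'm) pt \<Rightarrow> ('n, 'm) pt" where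
  "DPhi p w = (fst w, (DS p w, DC p w))"

definition U :: "('n, 'm) pt set" where
  "U = {p. \<forall>i\<in>{..<k} - A. h i (Pp p) < 0}"

lemma d_G': "((\<lambda>p. G' (Pp p)) has_derivative (\<lambda>w. blinfun_apply (G'' (Pp p)) (Pp w))) (at p)"
  using has_derivative_compose[OF d_Pp G2] by (simp add: o_def)

lemma d_H': "i < k \<Longrightarrow> ((\<lambda>p. H' i (Pp p)) has_derivative (\<lambda>w. blinfun_apply (H'' i (Pp p)) (Pp w))) (at p)"
  using has_derivative_compose[OF d_Pp H2] by (simp add: o_def)

lemma d_h: "i < k \<Longrightarrow> ((\<lambda>p. h i (Pp p)) has_derivative (\<lambda>w. blinfun_apply (H' i (Pp p)) (Pp w))) (at p)"
  using has_derivative_compose[OF d_Pp H1] by (simp add: o_def)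

lemma d_cf:
  assumes i: "i < k" and p: "p \<in> U"
  shows "((\<lambda>p. cf p i) has_derivative (\<lambda>w. dcf p w i)) (at p)"
proof (cases "i \<in> A")
  case True
  thus ?thesis unfolding cf_def dcf_def using d_mpj by simp
next
  case False
  have "h i (Pp p) < 0" using p i False by (auto simp: U_def)
  hence hne: "h i (Pp p) \<noteq> 0" by simp
  have "((\<lambda>p. tp p / (- h i (Pp p))) has_derivative
     (\<lambda>w. (tp w * (- h i (Pp p)) - tp p * (- blinfun_apply (H' i (Pp p)) (Pp w))) / ((- h i (Pp p)) * (- h i (Pp p))))) (at p)"
    by (rule has_derivative_divide'[OF d_tp has_derivative_minus[OF d_h[OF i]]]) (use hne in simp)
  thus ?thesis using False unfolding cf_def dcf_def
    by (simp add: power2_eq_square)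
qed

lemma d_term:
  assumes i: "i < k" and p: "p \<in> U"
  shows "((\<lambda>p. cf p i *\<^sub>R gy (H' i (Pp p))) has_derivative
     (\<lambda>w. dcf p w i *\<^sub>R gy (H' i (Pp p)) + cf p i *\<^sub>R gy (blinfun_apply (H'' i (Pp p)) (Pp w)))) (at p)"
  by (rule has_derivative_eq_rhs[OF has_derivative_scaleR[OF d_cf[OF i p] gy_has_derivative[OF d_H'[OF i]]]])
     (simp add: fun_eq_iff add.commute)

lemma d_S:
  assumes p: "p \<in> U"
  shows "(Sfun has_derivative DS p) (at p)"
  unfolding Sfun_def DS_def[abs_def]
  by (intro has_derivative_add gy_has_derivative d_G' has_derivative_sum d_term p) auto

lemma d_C: "(Cfun has_derivative DC p) (at p)"
  unfolding Cfun_def DC_def[abs_def]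
proof (intro has_derivative_vec_lambda_at)
  fix j :: 'm
  show "((\<lambda>p. if j \<in> e ` A then mp p $ j * h (ie j) (Pp p) + tp p else mp p $ j) has_derivative
        (\<lambda>w. if j \<in> e ` A then mp w $ j * h (ie j) (Pp p) + mp p $ j * blinfun_apply (H' (ie j) (Pp p)) (Pp w) + tp w
             else mp w $ j)) (at p)"
  proof (cases "j \<in> e ` A")
    case True
    have ik: "ie j < k" using ie_A[OF True] A_sub by auto
    have "((\<lambda>p. mp p $ j * h (ie j) (Pp p) + tp p) has_derivative
        (\<lambda>w. mp p $ j * blinfun_apply (H' (ie j) (Pp p)) (Pp w) + mp w $ j * h (ie j) (Pp p) + tp w)) (at p)"
      by (intro has_derivative_add has_derivative_mult d_mpj d_h[OF ik] d_tp)
    thus ?thesis using True by (simp add: algebra_simps)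
  next
    case False
    thus ?thesis using d_mpj by simp
  qed
qed

lemma d_Phi: "p \<in> U \<Longrightarrow> (Phi has_derivative DPhi p) (at p)"
  unfolding Phi_def DPhi_def[abs_def]
  by (intro has_derivative_Pair d_S d_C has_derivative_fst[OF has_derivative_ident])

end

lemma c_gy: "continuous_on S L \<Longrightarrow> continuous_on S (\<lambda>p. gy (L p))"
  unfolding gy_def by (intro continuous_on_vec_lambda blinfun.continuous_on continuous_on_const)

context bl begin

lemma c_Pp: "continuous_on S Pp" using linear_continuous_on[OF bl_Pp] .
lemma c_tp: "continuous_on S tp" using linear_continuous_on[OF bl_tp] .
lemma c_mpj: "continuous_on S (\<lambda>p. mp p $ j)"
  using linear_continuous_on[OF bounded_linear_compose[OF bounded_linear_vec_nth bl_mp]] .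

lemma c_G'': "continuous_on S (\<lambda>p. G'' (Pp p))"
  by (rule continuous_on_compose2[OF G3 c_Pp]) auto
lemma c_H'': "i < k \<Longrightarrow> continuous_on S (\<lambda>p. H'' i (Pp p))"
  by (rule continuous_on_compose2[OF H3 c_Pp]) auto
lemma c_G': "continuous_on S (\<lambda>p. G' (Pp p))"
  by (rule continuous_on_compose2[OF cont_G' c_Pp]) auto
lemma c_H': "i < k \<Longrightarrow> continuous_on S (\<lambda>p. H' i (Pp p))"
  by (rule continuous_on_compose2[OF cont_H' c_Pp]) auto
lemma c_h: "i < k \<Longrightarrow> continuous_on S (\<lambda>p. h i (Pp p))"
  by (rule continuous_on_compose2[OF cont_h c_Pp]) auto

lemma U_neg: "p \<in> U \<Longrightarrow> i < k \<Longrightarrow> i \<notin> A \<Longrightarrow> h i (Pp p) < 0"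
  by (simp add: U_def)

lemma c_cf: "i < k \<Longrightarrow> continuous_on U (\<lambda>p. cf p i)"
proof (cases "i \<in> A")
  case True thus ?thesis unfolding cf_def using c_mpj by simp
next
  case False
  assume i: "i < k"
  have "\<forall>p\<in>U. - h i (Pp p) \<noteq> 0" using i False U_neg by force
  thus ?thesis unfolding cf_def using False
    by (simp, intro continuous_on_divide c_tp continuous_on_minus c_h i) auto
qed

lemma c_dcf: "i < k \<Longrightarrow> continuous_on U (\<lambda>p. dcf p w i)"
proof (cases "i \<in> A")
  case True thus ?thesis unfolding dcf_def by (simp add: continuous_on_const)
next
  case False
  assume i: "i < k"
  have nz: "\<And>p. p \<in> U \<Longrightarrow> (h i (Pp p))^2 \<noteq> 0" using i False U_neg by force
  have eq: "(\<lambda>p. dcf p w i) = (\<lambda>p. (tp w * (- h i (Pp p)) + tp p * blinfun_apply (H' i (Pp p)) (Pp w)) / (h i (Pp p))^2)"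
    using False by (simp add: dcf_def fun_eq_iff)
  show ?thesis unfolding eq
    by (intro continuous_on_divide continuous_on_add continuous_on_mult c_tp continuous_on_minus
        c_h i continuous_on_const blinfun.continuous_on c_H' continuous_on_power c_Pp) (use nz in blast)
qed

lemma c_DS: "continuous_on U (\<lambda>p. DS p w)"
  unfolding DS_def
  by (intro continuous_on_add c_gy blinfun.continuous_on c_G'' continuous_on_const
      continuous_on_sum continuous_on_scaleR c_dcf c_H' c_cf c_H'') auto

lemma c_DC: "continuous_on U (\<lambda>p. DC p w)"
  unfolding DC_def
proof (intro continuous_on_vec_lambda)
  fix j :: 'm
  show "continuous_on U (\<lambda>p. if j \<in> e ` A then mp w $ j * h (ie j) (Pp p) + mp p $ j * blinfun_apply (H' (ie j) (Pp p)) (Pp w) + tp w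
                  else mp w $ j)"
  proof (cases "j \<in> e ` A")
    case True
    have ik: "ie j < k" using ie_A[OF True] A_sub by auto
    show ?thesis using True
      by (simp, intro continuous_on_add continuous_on_mult continuous_on_const c_h[OF ik] c_mpj
          blinfun.continuous_on c_H'[OF ik])
  qed (simp add: continuous_on_const)
qed

lemma c_DPhi: "continuous_on U (\<lambda>p. DPhi p w)"
  unfolding DPhi_def by (intro continuous_on_Pair continuous_on_const c_DS c_DC)

definition fD :: "('n, 'm) pt \<Rightarrow> (('n, 'm) pt \<Rightarrow>\<^sub>L ('n, 'm) pt)" where
  "fD p = Blinfun (DPhi p)"

lemma bl_DPhi: "p \<in> U \<Longrightarrow> bounded_linear (DPhi p)"
  using d_Phi has_derivative_bounded_linear by blast

lemma fD_apply: "p \<in> U \<Longrightarrow> blinfun_apply (fD p) = DPhi p"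
  unfolding fD_def using bl_DPhi by (simp add: bounded_linear_Blinfun_apply)

lemma c_fD: "continuous_on U fD"
proof (rule continuous_on_blinfun_componentwise)
  fix b :: "('n, 'm) pt" assume "b \<in> Basis"
  show "continuous_on U (\<lambda>p. blinfun_apply (fD p) b)"
    using c_DPhi[of b] by (rule continuous_on_cong[THEN iffD1, rotated 2]) (auto simp: fD_apply)
qed

lemma open_U: "open U"
proof -
  have "U = (\<Inter>i\<in>{..<k} - A. {p. h i (Pp p) < 0})" by (auto simp: U_def)
  moreover have "open {p. h i (Pp p) < 0}" if "i < k" for i
    using c_h[OF that, of UNIV] by (simp add: open_Collect_less continuous_on_const)
  ultimately show ?thesis by (auto intro!: open_INT)
qed

end

context bl begin

lemma hess_g: "SCc \<Longrightarrow> x' \<in> X \<Longrightarrow> blinfun_apply (blinfun_apply (G'' (x', y)) (0, v)) (0, v) \<ge> \<mu>g * (norm v)^2"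
proof -
  assume sc: "SCc" and x': "x' \<in> X"
  have cvx: "convex_on UNIV (\<lambda>y. g (x', y) - \<mu>g/2 * (norm y)^2)"
    using sc x' unfolding SCc_def strongly_convex_on_def by auto
  show ?thesis
    by (rule convex_second_deriv_lb[OF cvx partial_has_derivative[OF G1]
          partial_has_derivative[OF blinfun_apply_has_derivative[OF G2]]])
qed

lemma hess_h: "SCc \<Longrightarrow> x' \<in> X \<Longrightarrow> i < k \<Longrightarrow> blinfun_apply (blinfun_apply (H'' i (x', y)) (0, v)) (0, v) \<ge> 0"
proof -
  assume sc: "SCc" and x': "x' \<in> X" and i: "i < k"
  have cvx: "convex_on UNIV (\<lambda>y. h i (x', y) - 0/2 * (norm y)^2)"
    using sc x' i unfolding SCc_def by auto
  show ?thesis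
    using convex_second_deriv_lb[OF cvx partial_has_derivative[OF H1[OF i]]
          partial_has_derivative[OF blinfun_apply_has_derivative[OF H2[OF i]]]] by simp
qed

definition mu0 :: "real^'m" where "mu0 = (\<chi> j. if j \<in> e ` A then lam (ie j) else 0)"
definition p0 :: "('n, 'm) pt" where "p0 = ((x, 0), (y0, mu0))"

lemma p0_simps [simp]: "Pp p0 = (x, y0)" "tp p0 = 0" "mp p0 = mu0" "fst p0 = (x, 0)"
  by (auto simp: p0_def Pp_def tp_def mp_def)

lemma cf_p0: "i < k \<Longrightarrow> cf p0 i = lam i"
  by (auto simp: cf_def mu0_def lam_zero)

lemma p0_U: "p0 \<in> U"
  using inactive by (auto simp: U_def)

lemma Phi_p0: "Phi p0 = ((x, 0), (0, 0))"
proof -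
  have "Sfun p0 = 0" using stat0 by (simp add: Sfun_def cf_p0)
  moreover have "Cfun p0 = 0"
    unfolding Cfun_def vec_eq_iff
  proof (intro allI)
    fix j :: 'm
    show "(\<chi> j. if j \<in> e ` A then mp p0 $ j * h (ie j) (Pp p0) + tp p0 else mp p0 $ j) $ j = 0 $ j"
      using ie_A[of j] by (auto simp: mu0_def A_def)
  qed
  ultimately show ?thesis by (simp add: Phi_def)
qed

lemma inj_DPhi0:
  assumes w0: "DPhi p0 w = 0"
  shows "w = 0"
proof -
  obtain dx dt dy dm where w: "w = ((dx, dt), (dy, dm))" by (metis prod.collapse)
  have fw: "dx = 0" "dt = 0" using w0 by (auto simp: DPhi_def w zero_prod_def)
  have Pw: "Pp w = (0, dy)" "tp w = 0" "mp w = dm" using fw by (auto simp: w Pp_def tp_def mp_def)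
  have DC0: "DC p0 w = 0" and DS0: "DS p0 w = 0" using w0 by (auto simp: DPhi_def zero_prod_def)
  have dm_out: "dm $ j = 0" if "j \<notin> e ` A" for j
    using arg_cong[OF DC0, of "\<lambda>v. v $ j"] that by (simp add: DC_def Pw)
  have avdy: "av i \<bullet> dy = 0" if iA: "i \<in> A" for i
  proof -
    have "DC p0 w $ e i = 0" using DC0 by simp
    hence "dm $ e i * h i (x, y0) + lam i * blinfun_apply (H' i (x, y0)) (0, dy) = 0"
      using iA by (simp add: DC_def Pw mu0_def)
    hence "lam i * (av i \<bullet> dy) = 0" using iA by (simp add: A_def av_def gy_inner)
    thus ?thesis using lam_pos[OF iA] by simp
  qed
  have dcf0: "dcf p0 w i = (if i \<in> A then dm $ e i else 0)" for i
    by (simp add: dcf_def Pw)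
  have DSe: "DS p0 w = gy (blinfun_apply (G'' (x, y0)) (0, dy))
     + (\<Sum>i<k. (if i \<in> A then dm $ e i else 0) *\<^sub>R av i + lam i *\<^sub>R gy (blinfun_apply (H'' i (x, y0)) (0, dy)))"
    unfolding DS_def by (simp add: Pw dcf0 cf_p0 av_def)
  have dy0: "dy = 0"
  proof (cases SCc)
    case True
    have "DS p0 w \<bullet> dy = blinfun_apply (blinfun_apply (G'' (x, y0)) (0, dy)) (0, dy)
        + (\<Sum>i<k. (if i \<in> A then dm $ e i else 0) * (av i \<bullet> dy) + lam i * blinfun_apply (blinfun_apply (H'' i (x, y0)) (0, dy)) (0, dy))"
      unfolding DSe by (simp add: inner_add_left inner_sum_left gy_inner)
    also have "(\<Sum>i<k. (if i \<in> A then dm $ e i else 0) * (av i \<bullet> dy) + lam i * blinfun_apply (blinfun_apply (H'' i (x, y0)) (0, dy)) (0, dy))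
        = (\<Sum>i<k. lam i * blinfun_apply (blinfun_apply (H'' i (x, y0)) (0, dy)) (0, dy))"
      by (intro sum.cong) (auto simp: avdy)
    finally have eq: "blinfun_apply (blinfun_apply (G'' (x, y0)) (0, dy)) (0, dy)
        + (\<Sum>i<k. lam i * blinfun_apply (blinfun_apply (H'' i (x, y0)) (0, dy)) (0, dy)) = 0"
      using DS0 by simp
    have "(\<Sum>i<k. lam i * blinfun_apply (blinfun_apply (H'' i (x, y0)) (0, dy)) (0, dy)) \<ge> 0"
      using hess_h[OF True xX] kkt0 by (intro sum_nonneg mult_nonneg_nonneg) (auto simp: KKT_mult_def)
    moreover have "blinfun_apply (blinfun_apply (G'' (x, y0)) (0, dy)) (0, dy) \<ge> \<mu>g * (norm dy)^2"
      using hess_g[OF True xX] .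
    ultimately have "\<mu>g * (norm dy)^2 \<le> 0" using eq by linarith
    moreover have "\<mu>g > 0" using True by (simp add: SCc_def)
    ultimately have "(norm dy)^2 \<le> 0" by (simp add: mult_le_0_iff)
    thus ?thesis by simp
  next
    case False
    obtain \<gamma> c0 \<alpha> \<beta> where hl: "\<And>i y. i < k \<Longrightarrow> h i (x, y) = \<alpha> i \<bullet> y + \<beta> i"
      and gh: "\<And>i y. i < k \<Longrightarrow> gy (H' i (x, y)) = \<alpha> i"
      using lin_forms[OF False xX] by metis
    have "\<forall>i\<in>A. h i (x, y0 + dy) = h i (x, y0)"
    proof
      fix i assume iA: "i \<in> A"
      hence ik: "i < k" using A_sub by auto
      have "\<alpha> i \<bullet> dy = 0" using avdy[OF iA] gh[OF ik] by (simp add: av_def)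
      thus "h i (x, y0 + dy) = h i (x, y0)" by (simp add: hl[OF ik] inner_add_right)
    qed
    thus ?thesis using span_base[OF False] by blast
  qed
  have "(\<Sum>i<k. (if i \<in> A then dm $ e i else 0) *\<^sub>R av i) = 0"
    using DS0 unfolding DSe dy0 by (simp add: gy_linear zero_prod_def[symmetric])
  moreover have "(\<Sum>i<k. (if i \<in> A then dm $ e i else 0) *\<^sub>R av i) = (\<Sum>i\<in>A. dm $ e i *\<^sub>R av i)"
  proof -
    have "(\<Sum>i<k. (if i \<in> A then dm $ e i else 0) *\<^sub>R av i) = (\<Sum>i\<in>A. (if i \<in> A then dm $ e i else 0) *\<^sub>R av i)"
      using A_sub by (intro sum.mono_neutral_right) auto
    thus ?thesis by simp
  qed
  ultimately have "\<forall>i\<in>A. dm $ e i = 0" using licq_base[rule_format, of "\<lambda>i. dm $ e i"] by simp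
  hence "dm = 0" using dm_out by (auto simp: vec_eq_iff) (metis image_iff)
  thus ?thesis using w fw dy0 by (simp add: zero_prod_def)
qed

end

context bl begin

definition span_at where
  "span_at x' \<longleftrightarrow> (\<forall>d y. (\<forall>i\<in>A. h i (x', y + d) = h i (x', y)) \<longrightarrow> d = 0)"

lemma Phi_parts:
  assumes "Phi p = ((x', t), (0, 0))"
  shows "fst (fst p) = x'" "tp p = t" "Sfun p = 0" "Cfun p = 0"
  using assms by (auto simp: Phi_def tp_def)

lemma Pp_eq: "Pp p = (fst (fst p), fst (snd p))" by (simp add: Pp_def)

lemma good_point:
  assumes pU: "p \<in> U" and Pq: "Phi p = ((x', t), (0, 0))" and x': "x' \<in> X" and t: "t \<ge> 0"
    and mpos: "\<forall>i\<in>A. mp p $ e i > 0"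
    and sp: "\<not> SCc \<Longrightarrow> span_at x'"
  shows "t = 0 \<Longrightarrow> ystar g h k x' = {fst (snd p)}"
    and "t > 0 \<Longrightarrow> ytstar t g h k x' = {fst (snd p)}"
proof -
  define y where "y = fst (snd p)"
  have P: "Pp p = (x', y)" using Phi_parts(1)[OF Pq] by (simp add: Pp_eq y_def)
  have tp: "tp p = t" using Phi_parts(2)[OF Pq] .
  have S0: "Sfun p = 0" and C0: "Cfun p = 0" using Phi_parts[OF Pq] by auto
  define lv where "lv i = cf p i" for i
  have Ceq: "mp p $ e i * h i (x', y) + t = 0" if "i \<in> A" for i
  proof -
    have "Cfun p $ e i = 0" using C0 by simp
    thus ?thesis using that by (simp add: Cfun_def P tp)
  qed
  have hin: "h i (x', y) < 0" if "i < k" "i \<notin> A" for i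
    using U_neg[OF pU that] P by simp
  have st: "gy (G' (x', y)) + (\<Sum>i<k. lv i *\<^sub>R gy (H' i (x', y))) = 0"
    using S0 by (simp add: Sfun_def P lv_def)
  have lv_nn: "\<forall>i<k. lv i \<ge> 0"
  proof (intro allI impI)
    fix i assume i: "i < k"
    show "lv i \<ge> 0"
    proof (cases "i \<in> A")
      case True thus ?thesis using mpos by (simp add: lv_def cf_def less_imp_le)
    next
      case False
      thus ?thesis using hin[OF i False] t by (simp add: lv_def cf_def P tp divide_nonneg_neg)
    qed
  qed
  define L where "L z = g (x', z) + (\<Sum>i<k. lv i * h i (x', z))" for z
  have Lineq: "L y' \<ge> L y + cc/2 * (norm (y' - y))^2" for y'
    using lag_ineq(1)[OF x' lv_nn st] by (simp add: L_def)
  have Leq: "\<not> SCc \<Longrightarrow> L y' = L y" for y'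
    using lag_ineq(2)[OF x' lv_nn st] by (simp add: L_def)
  have SCmu: "SCc \<Longrightarrow> cc > 0" by (simp add: cc_def SCc_def)
  show "ystar g h k x' = {fst (snd p)}" if t0: "t = 0"
  proof -
    have hA: "h i (x', y) = 0" if "i \<in> A" for i
      using Ceq[OF that] mpos that t0 by force
    have lvh: "lv i * h i (x', y) = 0" if "i < k" for i
      by (cases "i \<in> A") (auto simp: hA lv_def cf_def tp t0)
    have yY: "y \<in> Yset h k x'"
    proof -
      have "h i (x', y) \<le> 0" if "i < k" for i
        using hA[of i] hin[OF that] by (cases "i \<in> A") auto
      thus ?thesis by (simp add: Yset_def)
    qed
    have Ly: "L y = g (x', y)" using lvh by (simp add: L_def sum.neutral)
    have low: "g (x', y') \<ge> g (x', y) + cc/2 * (norm (y' - y))^2" if "y' \<in> Yset h k x'" for y'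
    proof -
      have "(\<Sum>i<k. lv i * h i (x', y')) \<le> 0"
        using that lv_nn by (intro sum_nonpos mult_nonneg_nonpos) (auto simp: Yset_def)
      thus ?thesis using Lineq[of y'] Ly by (simp add: L_def)
    qed
    have ys: "y \<in> ystar g h k x'"
    proof -
      have "g (x', y) \<le> g (x', y')" if "y' \<in> Yset h k x'" for y'
      proof -
        have "cc/2 * (norm (y' - y))^2 \<ge> 0" using cc_nonneg by simp
        thus ?thesis using low[OF that] by linarith
      qed
      thus ?thesis using yY by (simp add: ystar_def)
    qed
    have uniq: "y' = y" if y's: "y' \<in> ystar g h k x'" for y'
    proof -
      have y'Y: "y' \<in> Yset h k x'" and le: "g (x', y') \<le> g (x', y)"
        using y's yY by (auto simp: ystar_def)
      show ?thesis
      proof (cases SCc)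
        case True
        have "cc/2 * (norm (y' - y))^2 \<le> 0" using low[OF y'Y] le by simp
        moreover have "cc/2 > 0" using SCmu[OF True] by simp
        ultimately have "(norm (y' - y))^2 \<le> 0" by (simp add: mult_le_0_iff)
        thus ?thesis by simp
      next
        case False
        have sumeq: "(\<Sum>i<k. lv i * h i (x', y')) \<ge> 0" using Leq[OF False, of y'] Ly le by (simp add: L_def)
        have nonpos: "\<forall>i\<in>{..<k}. lv i * h i (x', y') \<le> 0"
          using y'Y lv_nn by (auto simp: Yset_def intro!: mult_nonneg_nonpos)
        have "(\<Sum>i<k. - (lv i * h i (x', y'))) = 0"
          using sumeq sum_nonpos[of "{..<k}" "\<lambda>i. lv i * h i (x', y')"] nonpos by (simp add: sum_negf)
        hence z: "\<forall>i\<in>{..<k}. - (lv i * h i (x', y')) = 0"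
          using nonpos by (subst sum_nonneg_eq_0_iff[symmetric]) auto
        have "\<forall>i\<in>A. h i (x', y + (y' - y)) = h i (x', y)"
        proof
          fix i assume iA: "i \<in> A"
          hence "i < k" using A_sub by auto
          hence "lv i * h i (x', y') = 0" using z by auto
          moreover have "lv i > 0" using mpos iA by (simp add: lv_def cf_def)
          ultimately show "h i (x', y + (y' - y)) = h i (x', y)" using hA[OF iA] by simp
        qed
        hence "y' - y = 0" using sp[OF False] unfolding span_at_def by blast
        thus ?thesis by simp
      qed
    qed
    show ?thesis unfolding y_def[symmetric] using ys uniq by blast
  qed
  show "ytstar t g h k x' = {fst (snd p)}" if tpos: "t > 0"
  proof -
    have hneg: "h i (x', y) < 0" if "i < k" for i
    proof (cases "i \<in> A")
      case True
      have "mp p $ e i * h i (x', y) = - t" using Ceq[OF True] by simp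
      hence "mp p $ e i * h i (x', y) < 0" using tpos by simp
      thus ?thesis using mpos True by (force simp add: mult_less_0_iff)
    qed (use hin that in auto)
    have lvt: "lv i = t / (- h i (x', y))" if "i < k" for i
    proof (cases "i \<in> A")
      case True
      have "mp p $ e i * h i (x', y) = - t" using Ceq[OF True] by simp
      thus ?thesis using hneg[OF that] True by (simp add: lv_def cf_def field_simps)
    qed (simp add: lv_def cf_def P tp)
    have ineq: "gbar t g h k (x', y') \<ge> gbar t g h k (x', y) + cc/2 * (norm (y' - y))^2
        + (\<Sum>i<k. (- t * ln (- h i (x', y'))) - (- t * ln (- h i (x', y)) + lv i * (h i (x', y') - h i (x', y))))"
      if y'f: "\<forall>i<k. h i (x', y') < 0" for y'
    proof -
      have "gbar t g h k (x', y') = g (x', y') + (\<Sum>i<k. - t * ln (- h i (x', y')))"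
        by (simp add: gbar_def sum_distrib_left sum_negf)
      also have "(\<Sum>i<k. - t * ln (- h i (x', y'))) = (\<Sum>i<k. - t * ln (- h i (x', y)) + lv i * (h i (x', y') - h i (x', y)))
          + (\<Sum>i<k. (- t * ln (- h i (x', y'))) - (- t * ln (- h i (x', y)) + lv i * (h i (x', y') - h i (x', y))))"
        by (simp add: sum_subtractf)
      also have "(\<Sum>i<k. - t * ln (- h i (x', y)) + lv i * (h i (x', y') - h i (x', y)))
          = (\<Sum>i<k. - t * ln (- h i (x', y))) + (\<Sum>i<k. lv i * h i (x', y')) - (\<Sum>i<k. lv i * h i (x', y))"
        by (simp only: sum.distrib sum_subtractf right_diff_distrib add_diff_eq)
      finally have "gbar t g h k (x', y') = L y' - (\<Sum>i<k. lv i * h i (x', y)) + (\<Sum>i<k. - t * ln (- h i (x', y)))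
          + (\<Sum>i<k. (- t * ln (- h i (x', y'))) - (- t * ln (- h i (x', y)) + lv i * (h i (x', y') - h i (x', y))))"
        by (simp add: L_def)
      moreover have "gbar t g h k (x', y) = L y - (\<Sum>i<k. lv i * h i (x', y)) + (\<Sum>i<k. - t * ln (- h i (x', y)))"
        by (simp add: gbar_def L_def sum_distrib_left sum_negf)
      ultimately show ?thesis using Lineq[of y'] by simp
    qed
    have slack: "(- t * ln (- h i (x', y'))) - (- t * ln (- h i (x', y)) + lv i * (h i (x', y') - h i (x', y))) \<ge> 0"
      and slack0: "(- t * ln (- h i (x', y'))) - (- t * ln (- h i (x', y)) + lv i * (h i (x', y') - h i (x', y))) = 0
          \<Longrightarrow> h i (x', y') = h i (x', y)"
      if i: "i < k" and y'f: "h i (x', y') < 0" for i y'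
    proof -
      define u where "u = - h i (x', y')"
      define v where "v = - h i (x', y)"
      have uv: "u > 0" "v > 0" using y'f hneg[OF i] by (auto simp: u_def v_def)
      have eq: "(- t * ln (- h i (x', y'))) - (- t * ln (- h i (x', y)) + lv i * (h i (x', y') - h i (x', y)))
          = t * (ln v + (u - v) / v - ln u)"
        using uv by (simp add: lvt[OF i] u_def v_def field_simps)
      show "(- t * ln (- h i (x', y'))) - (- t * ln (- h i (x', y)) + lv i * (h i (x', y') - h i (x', y))) \<ge> 0"
        unfolding eq using ln_ineq[OF uv] tpos by simp
      assume "(- t * ln (- h i (x', y'))) - (- t * ln (- h i (x', y)) + lv i * (h i (x', y') - h i (x', y))) = 0"
      hence "ln u = ln v + (u - v) / v" using tpos unfolding eq by simp
      hence "u = v" using ln_ineq_eq uv by blast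
      thus "h i (x', y') = h i (x', y)" by (simp add: u_def v_def)
    qed
    have yin: "y \<in> ytstar t g h k x'"
      unfolding ytstar_def
    proof (intro CollectI conjI)
      show "\<forall>i<k. h i (x', y) < 0" using hneg by blast
      show "\<forall>y'. (\<forall>i<k. h i (x', y') < 0) \<longrightarrow> gbar t g h k (x', y) \<le> gbar t g h k (x', y')"
      proof (intro allI impI)
      fix y' assume y'f: "\<forall>i<k. h i (x', y') < 0"
      have "(\<Sum>i<k. (- t * ln (- h i (x', y'))) - (- t * ln (- h i (x', y)) + lv i * (h i (x', y') - h i (x', y)))) \<ge> 0"
        using slack y'f by (intro sum_nonneg) auto
      moreover have "cc/2 * (norm (y' - y))^2 \<ge> 0" using cc_nonneg by simp
      ultimately show "gbar t g h k (x', y) \<le> gbar t g h k (x', y')" using ineq[OF y'f] by linarith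
      qed
    qed
    have uniq: "y' = y" if y's: "y' \<in> ytstar t g h k x'" for y'
    proof -
      have y'f: "\<forall>i<k. h i (x', y') < 0" and le: "gbar t g h k (x', y') \<le> gbar t g h k (x', y)"
        using y's yin by (auto simp: ytstar_def)
      define sl where "sl i = (- t * ln (- h i (x', y'))) - (- t * ln (- h i (x', y)) + lv i * (h i (x', y') - h i (x', y)))" for i
      have slnn: "\<forall>i\<in>{..<k}. sl i \<ge> 0" using slack y'f by (auto simp: sl_def)
      have sumnn: "(\<Sum>i<k. sl i) \<ge> 0" using slnn by (intro sum_nonneg) auto
      have ineq': "gbar t g h k (x', y') \<ge> gbar t g h k (x', y) + cc/2 * (norm (y' - y))^2 + (\<Sum>i<k. sl i)"
        using ineq[OF y'f] by (simp add: sl_def)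
      show ?thesis
      proof (cases SCc)
        case True
        have "cc/2 * (norm (y' - y))^2 \<le> 0" using ineq' le sumnn by simp
        moreover have "cc/2 > 0" using SCmu[OF True] by simp
        ultimately have "(norm (y' - y))^2 \<le> 0" by (simp add: mult_le_0_iff)
        thus ?thesis by simp
      next
        case False
        have "cc/2 * (norm (y' - y))^2 \<ge> 0" using cc_nonneg by simp
        hence "(\<Sum>i<k. sl i) \<le> 0" using ineq' le by linarith
        hence "(\<Sum>i<k. sl i) = 0" using sumnn by simp
        hence z: "\<forall>i\<in>{..<k}. sl i = 0" using sum_nonneg_eq_0_iff[of "{..<k}" sl] slnn by simp
        have "\<forall>i\<in>A. h i (x', y + (y' - y)) = h i (x', y)"
        proof
          fix i assume iA: "i \<in> A"
          hence i: "i < k" using A_sub by auto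
          show "h i (x', y + (y' - y)) = h i (x', y)"
            using slack0[OF i] y'f i z by (simp add: sl_def)
        qed
        hence "y' - y = 0" using sp[OF False] unfolding span_at_def by blast
        thus ?thesis by simp
      qed
    qed
    show ?thesis unfolding y_def[symmetric] using yin uniq by blast
  qed
qed

end

context bl begin

lemma inj_DPhi0': "inj (DPhi p0)"
proof (rule injI)
  fix u v assume "DPhi p0 u = DPhi p0 v"
  hence "DPhi p0 (u - v) = 0" using bl_DPhi[OF p0_U] by (simp add: linear_simps)
  thus "u = v" using inj_DPhi0[of "u - v"] by simp
qed

lemma IFT_exists:
  "\<exists>V Psi gP. open V \<and> ((x, 0), (0, 0)) \<in> V \<and> (\<forall>q\<in>V. Psi q \<in> U) \<and> (\<forall>q\<in>V. Phi (Psi q) = q)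
     \<and> Psi ((x, 0), (0, 0)) = p0 \<and> continuous_on V Psi
     \<and> (\<forall>q\<in>V. (Psi has_derivative gP q) (at q))
     \<and> (\<forall>q\<in>V. gP q = inv (blinfun_apply (fD (Psi q))))
     \<and> (\<forall>q\<in>V. bij (blinfun_apply (fD (Psi q))))"
proof -
  have lin: "linear (DPhi p0)" using bl_DPhi[OF p0_U] bounded_linear.linear by blast
  obtain gl where gl: "linear gl" "gl \<circ> DPhi p0 = id"
    using linear_injective_left_inverse[OF lin inj_DPhi0'] by blast
  define invf where "invf = Blinfun gl"
  have invf_apply: "blinfun_apply invf = gl"
    unfolding invf_def using gl(1) by (simp add: bounded_linear_Blinfun_apply linear_conv_bounded_linear)
  have invf: "invf o\<^sub>L fD p0 = id_blinfun"
    by (rule blinfun_eqI) (simp add: invf_apply fD_apply[OF p0_U] pointfree_idE[OF gl(2)])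
  have derf: "\<And>p. p \<in> U \<Longrightarrow> (Phi has_derivative blinfun_apply (fD p)) (at p)"
    using d_Phi fD_apply by simp
  obtain U' V Psi gP where "open U'" "U' \<subseteq> U" "p0 \<in> U'" "open V" "Phi p0 \<in> V"
    and hom: "homeomorphism U' V Phi Psi"
    and der: "\<And>y. y \<in> V \<Longrightarrow> (Psi has_derivative (gP y)) (at y)"
    and geq: "\<And>y. y \<in> V \<Longrightarrow> gP y = inv (blinfun_apply (fD (Psi y)))"
    and bij: "\<And>y. y \<in> V \<Longrightarrow> bij (blinfun_apply (fD (Psi y)))"
    using inverse_function_theorem[OF open_U derf c_fD p0_U invf] by blast
  show ?thesis
  proof (intro exI conjI ballI)
    show "open V" by fact
    show "((x, 0), (0, 0)) \<in> V" using \<open>Phi p0 \<in> V\<close> Phi_p0 by simp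
    show "Psi q \<in> U" if "q \<in> V" for q using hom that \<open>U' \<subseteq> U\<close> unfolding homeomorphism_def by blast
    show "Phi (Psi q) = q" if "q \<in> V" for q using hom that unfolding homeomorphism_def by blast
    show "Psi ((x, 0), (0, 0)) = p0" using hom \<open>p0 \<in> U'\<close> Phi_p0 unfolding homeomorphism_def by metis
    show "continuous_on V Psi" using hom unfolding homeomorphism_def by blast
  qed (use der geq bij in auto)
qed

end

locale bl2 = bl f g h k X \<mu>g x G' G'' H' H''
  for f g :: "((real^'n) \<times> (real^'m)) \<Rightarrow> real"
    and h :: "nat \<Rightarrow> ((real^'n) \<times> (real^'m)) \<Rightarrow> real"
    and k :: nat and X :: "(real^'n) set" and \<mu>g :: real and x :: "real^'n"
    and G' G'' H' H'' +
  fixes V :: "('n, 'm) pt set" and Psi :: "('n, 'm) pt \<Rightarrow> ('n, 'm) pt"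
    and gP :: "('n, 'm) pt \<Rightarrow> ('n, 'm) pt \<Rightarrow> ('n, 'm) pt"
    and F' :: "((real^'n) \<times> (real^'m)) \<Rightarrow> (((real^'n) \<times> (real^'m)) \<Rightarrow>\<^sub>L real)"
  assumes V_open: "open V" and q0V: "((x, 0), (0, 0)) \<in> V"
    and Psi_U: "\<And>q. q \<in> V \<Longrightarrow> Psi q \<in> U"
    and Phi_Psi: "\<And>q. q \<in> V \<Longrightarrow> Phi (Psi q) = q"
    and Psi_q0: "Psi ((x, 0), (0, 0)) = p0"
    and Psi_cont: "continuous_on V Psi"
    and Psi_der: "\<And>q. q \<in> V \<Longrightarrow> (Psi has_derivative gP q) (at q)"
    and gP_eq: "\<And>q. q \<in> V \<Longrightarrow> gP q = inv (blinfun_apply (fD (Psi q)))"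
    and fD_bij: "\<And>q. q \<in> V \<Longrightarrow> bij (blinfun_apply (fD (Psi q)))"
    and F1: "\<And>z. (f has_derivative blinfun_apply (F' z)) (at z)"
    and F2: "continuous_on UNIV F'"
begin

definition qq :: "real^'n \<Rightarrow> real \<Rightarrow> ('n, 'm) pt" where "qq x' t = ((x', t), (0, 0))"

lemma span_from_bij:
  assumes nsc: "\<not> SCc" and x': "x' \<in> X" and qV: "qq x' 0 \<in> V"
  shows "span_at x'"
  unfolding span_at_def
proof (intro allI impI)
  fix d y0' assume hd: "\<forall>i\<in>A. h i (x', y0' + d) = h i (x', y0')"
  define p where "p = Psi (qq x' 0)"
  have pU: "p \<in> U" using Psi_U[OF qV] by (simp add: p_def)
  have Pq: "Phi p = ((x', 0), (0, 0))" using Phi_Psi[OF qV] by (simp add: p_def qq_def)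
  obtain yq where P: "Pp p = (x', yq)" using Phi_parts(1)[OF Pq] by (simp add: Pp_eq)
  have tp0: "tp p = 0" using Phi_parts(2)[OF Pq] .
  obtain \<gamma> c0 \<alpha> \<beta> where gl: "\<And>y. g (x', y) = \<gamma> \<bullet> y + c0" and hl: "\<And>i y. i < k \<Longrightarrow> h i (x', y) = \<alpha> i \<bullet> y + \<beta> i"
    and gg: "\<And>y. gy (G' (x', y)) = \<gamma>" and gh: "\<And>i y. i < k \<Longrightarrow> gy (H' i (x', y)) = \<alpha> i"
    using lin_forms[OF nsc x'] by metis
  have ad: "\<alpha> i \<bullet> d = 0" if "i \<in> A" for i
  proof -
    have ik: "i < k" using that A_sub by auto
    have "h i (x', y0' + d) = h i (x', y0')" using hd that by blast
    thus ?thesis by (simp add: hl[OF ik] inner_add_right)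
  qed
  define w :: "('n, 'm) pt" where "w = ((0, 0), (d, 0))"
  have Pw: "Pp w = (0, d)" "tp w = 0" "mp w = 0" "fst w = (0, 0)" by (auto simp: w_def Pp_def tp_def mp_def)
  have hessG: "gy (blinfun_apply (G'' (x', yq)) (0, d)) = 0"
  proof -
    have "blinfun_apply (blinfun_apply (G'' (x', yq)) (0, d)) (0, axis j 1) = 0" for j
      by (rule affine_hess[OF G2, where c = "\<gamma> \<bullet> axis j 1"]) (simp add: gy_inner gg)
    thus ?thesis by (simp add: gy_def vec_eq_iff)
  qed
  have hessH: "gy (blinfun_apply (H'' i (x', yq)) (0, d)) = 0" if i: "i < k" for i
  proof -
    have "blinfun_apply (blinfun_apply (H'' i (x', yq)) (0, d)) (0, axis j 1) = 0" for j
      by (rule affine_hess[OF H2[OF i], where c = "\<alpha> i \<bullet> axis j 1"]) (simp add: gy_inner gh[OF i])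
    thus ?thesis by (simp add: gy_def vec_eq_iff)
  qed
  have dcf0: "dcf p w i = 0" for i by (simp add: dcf_def Pw tp0)
  have DS0: "DS p w = 0" unfolding DS_def using hessG hessH by (simp add: Pw dcf0 P)
  have DC0: "DC p w = 0"
    unfolding DC_def vec_eq_iff
  proof
    fix j :: 'm
    show "(\<chi> j. if j \<in> e ` A then mp w $ j * h (ie j) (Pp p) + mp p $ j * blinfun_apply (H' (ie j) (Pp p)) (Pp w) + tp w
                  else mp w $ j) $ j = 0 $ j"
    proof (cases "j \<in> e ` A")
      case True
      have iA: "ie j \<in> A" using ie_A[OF True] .
      hence ik: "ie j < k" using A_sub by auto
      have "blinfun_apply (H' (ie j) (Pp p)) (Pp w) = 0"
        using ad[OF iA] by (simp add: P Pw gy_inner gh[OF ik])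
      thus ?thesis using True by (simp add: Pw)
    qed (simp add: Pw)
  qed
  have "DPhi p w = 0" by (simp add: DPhi_def Pw DS0 DC0 zero_prod_def)
  moreover have "DPhi p 0 = 0" using bl_DPhi[OF pU] by (simp add: linear_simps)
  moreover have "inj (DPhi p)" using fD_bij[OF qV] fD_apply[OF pU] by (simp add: p_def bij_is_inj)
  ultimately have "w = 0" by (metis injD)
  thus "d = 0" by (simp add: w_def zero_prod_def)
qed

end

context bl2 begin

lemma mp_p0_pos: "\<forall>i\<in>A. mp p0 $ e i > 0"
  using lam_pos by (simp add: mu0_def)

lemma dist_qq: "dist (qq x' t) (qq x 0) \<le> dist x' x + \<bar>t\<bar>"
proof -
  have "dist (qq x' t) (qq x 0) = dist (x', t) (x, 0)" by (simp add: qq_def dist_Pair_Pair)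
  also have "\<dots> = sqrt ((dist x' x)^2 + (dist t 0)^2)" by (simp add: dist_Pair_Pair)
  also have "\<dots> \<le> \<bar>dist x' x\<bar> + \<bar>dist t 0\<bar>" by (rule sqrt_sum_squares_le_sum_abs)
  finally show ?thesis by simp
qed

lemma delta_ex: "\<exists>\<delta>>0. \<forall>x' t. dist x' x < \<delta> \<longrightarrow> \<bar>t\<bar> < \<delta> \<longrightarrow> qq x' t \<in> V \<and> (\<forall>i\<in>A. mp (Psi (qq x' t)) $ e i > 0)"
proof -
  define Oset where "Oset = (\<Inter>i\<in>A. {p :: ('n, 'm) pt. 0 < mp p $ e i})"
  have oO: "open Oset" unfolding Oset_def
    using c_mpj[of UNIV] by (intro open_INT finA ballI open_Collect_less continuous_on_const) auto
  have p0O: "Psi (qq x 0) \<in> Oset" using mp_p0_pos Psi_q0 by (simp add: Oset_def qq_def)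
  have q0V': "qq x 0 \<in> V" using q0V by (simp add: qq_def)
  have "isCont Psi (qq x 0)" using Psi_cont V_open q0V' continuous_on_eq_continuous_at by blast
  hence "(Psi \<longlongrightarrow> Psi (qq x 0)) (nhds (qq x 0))"
    by (simp add: isCont_def tendsto_at_iff_tendsto_nhds)
  hence ev1: "\<forall>\<^sub>F q in nhds (qq x 0). Psi q \<in> Oset" using topological_tendstoD oO p0O by blast
  have ev2: "\<forall>\<^sub>F q in nhds (qq x 0). q \<in> V" using eventually_nhds_in_open V_open q0V' by blast
  from eventually_conj[OF ev1 ev2] obtain \<epsilon> where \<epsilon>: "\<epsilon> > 0" "\<And>q. dist q (qq x 0) < \<epsilon> \<Longrightarrow> Psi q \<in> Oset \<and> q \<in> V"
    unfolding eventually_nhds_metric by blast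
  show ?thesis
  proof (intro exI[of _ "\<epsilon>/2"] conjI allI impI)
    show "\<epsilon>/2 > 0" using \<epsilon> by simp
    fix x' t assume "dist x' x < \<epsilon>/2" "\<bar>t\<bar> < \<epsilon>/2"
    hence "dist (qq x' t) (qq x 0) < \<epsilon>" using dist_qq[of x' t] by simp
    hence "Psi (qq x' t) \<in> Oset \<and> qq x' t \<in> V" using \<epsilon> by blast
    thus "qq x' t \<in> V" "\<forall>i\<in>A. mp (Psi (qq x' t)) $ e i > 0" by (auto simp: Oset_def)
  qed
qed

definition Yt :: "real \<Rightarrow> real^'n \<Rightarrow> real^'m" where "Yt t x' = fst (snd (Psi (qq x' t)))"
definition DYt :: "real \<Rightarrow> real^'n \<Rightarrow> real^'m" where "DYt t v = fst (snd (gP (qq x t) ((v, 0), (0, 0))))"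

lemma Yt_der:
  assumes "qq x t \<in> V"
  shows "(Yt t has_derivative DYt t) (at x)"
proof -
  have d1: "((\<lambda>x'. qq x' t) has_derivative (\<lambda>v. ((v, 0), (0, 0)))) (at x)"
    unfolding qq_def
    by (rule has_derivative_eq_rhs[OF has_derivative_Pair[OF has_derivative_Pair[OF has_derivative_ident has_derivative_const] has_derivative_const]])
       (simp add: fun_eq_iff zero_prod_def)
  have d2: "((\<lambda>x'. Psi (qq x' t)) has_derivative (\<lambda>v. gP (qq x t) ((v, 0), (0, 0)))) (at x)"
    using has_derivative_compose[OF d1 Psi_der[OF assms]] by (simp add: o_def)
  have bl: "bounded_linear (\<lambda>p :: ('n, 'm) pt. fst (snd p))"
    by (intro bounded_linear_compose[OF bounded_linear_fst] bounded_linear_snd)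
  show ?thesis unfolding Yt_def[abs_def] DYt_def[abs_def]
    using bounded_linear.has_derivative[OF bl d2] .
qed

lemma good_at:
  assumes x': "x' \<in> X" and t: "t \<ge> 0" and qV: "qq x' t \<in> V" and q0: "qq x' 0 \<in> V"
    and mpos: "\<forall>i\<in>A. mp (Psi (qq x' t)) $ e i > 0"
  shows "t = 0 \<Longrightarrow> ystar g h k x' = {Yt t x'}" and "t > 0 \<Longrightarrow> ytstar t g h k x' = {Yt t x'}"
proof -
  have pU: "Psi (qq x' t) \<in> U" using Psi_U[OF qV] .
  have Pq: "Phi (Psi (qq x' t)) = ((x', t), (0, 0))" using Phi_Psi[OF qV] by (simp add: qq_def)
  have sp: "\<not> SCc \<Longrightarrow> span_at x'" using span_from_bij[OF _ x' q0] .
  show "t = 0 \<Longrightarrow> ystar g h k x' = {Yt t x'}"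
    using good_point(1)[OF pU Pq x' t mpos sp] by (simp add: Yt_def)
  show "t > 0 \<Longrightarrow> ytstar t g h k x' = {Yt t x'}"
    using good_point(2)[OF pU Pq x' t mpos sp] by (simp add: Yt_def)
qed

lemma main_result:
  "\<exists>Ys DYs Yt DYt.
           (\<forall>\<^sub>F x' in nhds x. x' \<in> X \<longrightarrow> ystar g h k x' = {Ys x'})
         \<and> (Ys has_derivative DYs) (at x within X)
         \<and> (\<forall>\<^sub>F t in at_right 0.
               (\<forall>\<^sub>F x' in nhds x. x' \<in> X \<longrightarrow> ytstar t g h k x' = {Yt t x'})
             \<and> (Yt t has_derivative DYt t) (at x within X))
         \<and> ((\<lambda>t. hypergrad f (Yt t) (DYt t) x) \<longlongrightarrow> hypergrad f Ys DYs x) (at_right 0)"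
proof -
  obtain \<delta> where \<delta>: "\<delta> > 0" "\<And>x' t. dist x' x < \<delta> \<Longrightarrow> \<bar>t\<bar> < \<delta> \<Longrightarrow> qq x' t \<in> V \<and> (\<forall>i\<in>A. mp (Psi (qq x' t)) $ e i > 0)"
    using delta_ex by blast
  have c1: "\<forall>\<^sub>F x' in nhds x. x' \<in> X \<longrightarrow> ystar g h k x' = {Yt 0 x'}"
    unfolding eventually_nhds_metric
  proof (intro exI[of _ \<delta>] conjI allI impI)
    show "\<delta> > 0" by fact
    fix x' assume d: "dist x' x < \<delta>" and x': "x' \<in> X"
    have q: "qq x' 0 \<in> V \<and> (\<forall>i\<in>A. mp (Psi (qq x' 0)) $ e i > 0)" using \<delta>(2)[OF d] \<delta>(1) by simp
    show "ystar g h k x' = {Yt 0 x'}" using good_at(1)[OF x' order_refl conjunct1[OF q] conjunct1[OF q] conjunct2[OF q]] by simp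
  qed
  have c2: "(Yt 0 has_derivative DYt 0) (at x within X)"
  proof -
    have "qq x 0 \<in> V" using \<delta>(2)[of x 0] \<delta>(1) by simp
    hence "(Yt 0 has_derivative DYt 0) (at x)" by (rule Yt_der)
    thus ?thesis by (rule has_derivative_at_withinI)
  qed
  have c3: "\<forall>\<^sub>F t in at_right 0.
               (\<forall>\<^sub>F x' in nhds x. x' \<in> X \<longrightarrow> ytstar t g h k x' = {Yt t x'})
             \<and> (Yt t has_derivative DYt t) (at x within X)"
    unfolding eventually_at_right_field
  proof (intro exI[of _ \<delta>] conjI allI impI)
    show "0 < \<delta>" by fact
    fix t :: real assume t: "0 < t" "t < \<delta>"
    show "(Yt t has_derivative DYt t) (at x within X)"
    proof -
      have "qq x t \<in> V" using \<delta>(2)[of x t] t by simp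
      hence "(Yt t has_derivative DYt t) (at x)" by (rule Yt_der)
      thus ?thesis by (rule has_derivative_at_withinI)
    qed
    show "\<forall>\<^sub>F x' in nhds x. x' \<in> X \<longrightarrow> ytstar t g h k x' = {Yt t x'}"
      unfolding eventually_nhds_metric
    proof (intro exI[of _ \<delta>] conjI allI impI)
      show "\<delta> > 0" by fact
      fix x' assume d: "dist x' x < \<delta>" and x': "x' \<in> X"
      have q: "qq x' t \<in> V \<and> (\<forall>i\<in>A. mp (Psi (qq x' t)) $ e i > 0)" using \<delta>(2)[OF d] t by simp
      have q0: "qq x' 0 \<in> V" using \<delta>(2)[OF d] \<delta>(1) by simp
      have tt: "t \<ge> 0" using t by simp
      show "ytstar t g h k x' = {Yt t x'}"
        using good_at(2)[OF x' tt conjunct1[OF q] q0 conjunct2[OF q] t(1)] .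
    qed
  qed
  have evV: "\<forall>\<^sub>F t in at_right 0. qq x t \<in> V"
    unfolding eventually_at_right_field using \<delta> by (intro exI[of _ \<delta>]) auto
  have q0V': "qq x 0 \<in> V" using q0V by (simp add: qq_def)
  have Tq: "((\<lambda>t. qq x t) \<longlongrightarrow> qq x 0) (at_right 0)"
    unfolding qq_def by (intro tendsto_intros)
  have TPsi: "((\<lambda>t. Psi (qq x t)) \<longlongrightarrow> Psi (qq x 0)) (at_right 0)"
    by (rule continuous_on_tendsto_compose[OF Psi_cont Tq q0V' evV])
  have TY: "((\<lambda>t. Yt t x) \<longlongrightarrow> Yt 0 x) (at_right 0)"
    unfolding Yt_def by (intro tendsto_fst tendsto_snd TPsi)
  have evU: "\<forall>\<^sub>F t in at_right 0. Psi (qq x t) \<in> U" using evV by eventually_elim (rule Psi_U)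
  have TM: "((\<lambda>t. fD (Psi (qq x t))) \<longlongrightarrow> fD (Psi (qq x 0))) (at_right 0)"
    by (rule continuous_on_tendsto_compose[OF c_fD TPsi Psi_U[OF q0V'] evU])
  have evB: "\<forall>\<^sub>F t in at_right 0. bij (blinfun_apply (fD (Psi (qq x t))))"
    using evV by eventually_elim (rule fD_bij)
  have TD: "((\<lambda>t. DYt t v) \<longlongrightarrow> DYt 0 v) (at_right 0)" for v
  proof -
    define w :: "('n, 'm) pt" where "w = ((v, 0), (0, 0))"
    have "((\<lambda>t. inv (blinfun_apply (fD (Psi (qq x t)))) w) \<longlongrightarrow> inv (blinfun_apply (fD (Psi (qq x 0)))) w) (at_right 0)"
      by (rule inv_blinfun_tendsto[OF TM fD_bij[OF q0V'] evB])
    hence "((\<lambda>t. fst (snd (inv (blinfun_apply (fD (Psi (qq x t)))) w))) \<longlongrightarrow> fst (snd (inv (blinfun_apply (fD (Psi (qq x 0)))) w))) (at_right 0)"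
      by (intro tendsto_fst tendsto_snd)
    moreover have "\<forall>\<^sub>F t in at_right 0. fst (snd (inv (blinfun_apply (fD (Psi (qq x t)))) w)) = DYt t v"
      using evV by eventually_elim (simp add: DYt_def gP_eq w_def)
    moreover have "fst (snd (inv (blinfun_apply (fD (Psi (qq x 0)))) w)) = DYt 0 v"
      by (simp add: DYt_def gP_eq[OF q0V'] w_def)
    ultimately show ?thesis using Lim_transform_eventually by fastforce
  qed
  have fd: "frechet_derivative f (at z) = blinfun_apply (F' z)" for z
    using frechet_derivative_at[OF F1[of z]] by simp
  have TF: "((\<lambda>t. F' (x, Yt t x)) \<longlongrightarrow> F' (x, Yt 0 x)) (at_right 0)"
    by (rule continuous_on_tendsto_compose[OF F2 tendsto_Pair[OF tendsto_const TY]]) auto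
  have c4: "((\<lambda>t. hypergrad f (Yt t) (DYt t) x) \<longlongrightarrow> hypergrad f (Yt 0) (DYt 0) x) (at_right 0)"
    unfolding hypergrad_def fd
    by (intro tendsto_vec_lambda blinfun.tendsto TF tendsto_Pair tendsto_const TD)
  show ?thesis
    apply (rule exI[where x="Yt 0"])
    apply (rule exI[where x="DYt 0"])
    apply (rule exI[where x=Yt])
    apply (rule exI[where x=DYt])
    using c1 c2 c3 c4 by (intro conjI)
qed

end

theorem theorem5:
  fixes f g :: "((real^'n) \<times> (real^'m)) \<Rightarrow> real"
    and h :: "nat \<Rightarrow> ((real^'n) \<times> (real^'m)) \<Rightarrow> real"
    and k :: nat
    and X :: "(real^'n) set"
    and \<mu>g :: real
    and x :: "real^'n"
  assumes A1: "C1_fun f" "C2_fun g" "\<forall>i<k. C2_fun (h i)"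
    and A2: "convex X" "compact X" "\<forall>x\<in>X. \<exists>y. \<forall>i<k. h i (x, y) < 0"
    and A3: "\<forall>x\<in>X. \<forall>y\<in>ystar g h k x. LICQ h k x y"
    and SC_or_LIN:
      "(\<mu>g > 0 \<and> (\<forall>x\<in>X. strongly_convex_on UNIV (\<lambda>y. g (x, y)) \<mu>g
                         \<and> (\<forall>i<k. convex_on UNIV (\<lambda>y. h i (x, y)))))
       \<or> (\<forall>x\<in>X. (\<exists>a b. \<forall>y. g (x, y) = a \<bullet> y + b)
                 \<and> (\<forall>i<k. \<exists>a b. \<forall>y. h i (x, y) = a \<bullet> y + b)
                 \<and> compact (Yset h k x))"
    and xX: "x \<in> X"
    and scsc: "SCSC_point g h k x"
  shows "\<exists>Ys DYs Yt DYt.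
           (\<forall>\<^sub>F x' in nhds x. x' \<in> X \<longrightarrow> ystar g h k x' = {Ys x'})
         \<and> (Ys has_derivative DYs) (at x within X)
         \<and> (\<forall>\<^sub>F t in at_right 0.
               (\<forall>\<^sub>F x' in nhds x. x' \<in> X \<longrightarrow> ytstar t g h k x' = {Yt t x'})
             \<and> (Yt t has_derivative DYt t) (at x within X))
         \<and> ((\<lambda>t. hypergrad f (Yt t) (DYt t) x) \<longlongrightarrow> hypergrad f Ys DYs x) (at_right 0)"
proof -
  obtain F' where F1: "\<And>z. (f has_derivative blinfun_apply (F' z)) (at z)" and F2: "continuous_on UNIV F'"
    using A1(1) unfolding C1_fun_def by blast
  obtain G' G'' where G1: "\<And>z. (g has_derivative blinfun_apply (G' z)) (at z)"
    and G2: "\<And>z. (G' has_derivative blinfun_apply (G'' z)) (at z)" and G3: "continuous_on UNIV G''"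
    using A1(2) unfolding C2_fun_def by blast
  have "\<forall>i. \<exists>p. i < k \<longrightarrow> ((\<forall>z. (h i has_derivative blinfun_apply (fst p z)) (at z))
      \<and> (\<forall>z. (fst p has_derivative blinfun_apply (snd p z)) (at z)) \<and> continuous_on UNIV (snd p))"
  proof
    fix i
    show "\<exists>p. i < k \<longrightarrow> ((\<forall>z. (h i has_derivative blinfun_apply (fst p z)) (at z))
      \<and> (\<forall>z. (fst p has_derivative blinfun_apply (snd p z)) (at z)) \<and> continuous_on UNIV (snd p))"
    proof (cases "i < k")
      case True
      then obtain a b where "(\<forall>z. (h i has_derivative blinfun_apply (a z)) (at z))
        \<and> (\<forall>z. (a has_derivative blinfun_apply (b z)) (at z)) \<and> continuous_on UNIV b"
        using A1(3) unfolding C2_fun_def by blast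
      thus ?thesis by (intro exI[of _ "(a, b)"]) simp
    qed simp
  qed
  then obtain HH where HH: "\<And>i. i < k \<Longrightarrow> ((\<forall>z. (h i has_derivative blinfun_apply (fst (HH i) z)) (at z))
      \<and> (\<forall>z. (fst (HH i) has_derivative blinfun_apply (snd (HH i) z)) (at z)) \<and> continuous_on UNIV (snd (HH i)))"
    by metis
  define H' where "H' i = fst (HH i)" for i
  define H'' where "H'' i = snd (HH i)" for i
  interpret bl f g h k X \<mu>g x G' G'' H' H''
  proof
    show "\<And>z. (g has_derivative blinfun_apply (G' z)) (at z)" by (rule G1)
    show "\<And>z. (G' has_derivative blinfun_apply (G'' z)) (at z)" by (rule G2)
    show "continuous_on UNIV G''" by (rule G3)
    show "\<And>i z. i < k \<Longrightarrow> (h i has_derivative blinfun_apply (H' i z)) (at z)" using HH unfolding H'_def by blast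
    show "\<And>i z. i < k \<Longrightarrow> (H' i has_derivative blinfun_apply (H'' i z)) (at z)" using HH unfolding H'_def H''_def by blast
    show "\<And>i. i < k \<Longrightarrow> continuous_on UNIV (H'' i)" using HH unfolding H''_def by blast
  qed (use A2(3) A3 SC_or_LIN xX scsc in auto)
  obtain V Psi gP where ift: "open V" "((x, 0), (0, 0)) \<in> V" "\<forall>q\<in>V. Psi q \<in> U" "\<forall>q\<in>V. Phi (Psi q) = q"
     "Psi ((x, 0), (0, 0)) = p0" "continuous_on V Psi"
     "\<forall>q\<in>V. (Psi has_derivative gP q) (at q)"
     "\<forall>q\<in>V. gP q = inv (blinfun_apply (fD (Psi q)))"
     "\<forall>q\<in>V. bij (blinfun_apply (fD (Psi q)))"
    using IFT_exists by blast
  interpret bl2 f g h k X \<mu>g x G' G'' H' H'' V Psi gP F'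
    by (unfold_locales) (use ift F1 F2 in auto)
  show ?thesis by (rule main_result)
qed

end
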